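(* Let $\mathbb{T}$ be a time scale with $\sup\mathbb{T}=+\infty$ and bounded graininess, and let $A$ be a real $n\times n$ matrix. The system $x^\Delta=Ax$ on $\mathbb{T}$ is uniformly exponentially stable if and only if $\operatorname{spec}(A)\subset\mathcal{S}_\mathbb{T}$.
   Context: A system $x^\Delta=Ax$ (with $x$ real or complex) on a time scale $\mathbb{T}$ is uniformly exponentially stable if there exist $K\ge1$, $\alpha>0$ and an open neighborhood $V$ of $0$ such that for all $t_0\le t$ in $\mathbb{T}$ and all $x_0\in V$ the solution with $x(t_0)=x_0$ satisfies $\|x(t)\|\le Ke^{-\alpha(t-t_0)}\|x_0\|$. Here $x^\Delta$ is the delta derivative on $\mathbb{T}$. $\mathcal{S}_\mathbb{T}$ is the set of $\lambda\in\mathbb{C}$ for which the scalar equation $x^\Delta=\lambda x$ on $\mathbb{T}$ is uniformly exponentially stable. $\operatorname{spec}(A)$ is the set of (complex) eigenvalues of $A$. *)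

theory Defs
  imports "HOL-Analysis.Analysis"
begin

definition time_scale :: "real set \<Rightarrow> bool" where
  "time_scale T \<longleftrightarrow> T \<noteq> {} \<and> closed T"

definition sigma :: "real set \<Rightarrow> real \<Rightarrow> real" where
  "sigma T t = (if {s \<in> T. s > t} = {} then t else Inf {s \<in> T. s > t})"

definition graininess :: "real set \<Rightarrow> real \<Rightarrow> real" where
  "graininess T t = sigma T t - t"

definition has_delta_derivative ::
  "real set \<Rightarrow> (real \<Rightarrow> 'v::real_normed_vector) \<Rightarrow> 'v \<Rightarrow> real \<Rightarrow> bool" where
  "has_delta_derivative T f v t \<longleftrightarrow>
     (\<forall>\<epsilon>>0. \<exists>\<delta>>0. \<forall>s\<in>T. \<bar>s - t\<bar> < \<delta> \<longrightarrow>
        norm (f (sigma T t) - f s - (sigma T t - s) *\<^sub>R v) \<le> \<epsilon> * \<bar>sigma T t - s\<bar>)"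

definition is_solution ::
  "real set \<Rightarrow> ('v::real_normed_vector \<Rightarrow> 'v) \<Rightarrow> real \<Rightarrow> (real \<Rightarrow> 'v) \<Rightarrow> bool" where
  "is_solution T F t0 x \<longleftrightarrow>
     (\<forall>t\<in>T. t0 \<le> t \<longrightarrow> has_delta_derivative (T \<inter> {t0..}) x (F (x t)) t)"

definition uniformly_exp_stable ::
  "real set \<Rightarrow> ('v::real_normed_vector \<Rightarrow> 'v) \<Rightarrow> bool" where
  "uniformly_exp_stable T F \<longleftrightarrow>
     (\<exists>K \<ge> 1. \<exists>\<alpha> > 0. \<exists>V. open V \<and> 0 \<in> V \<and>
        (\<forall>t0\<in>T. \<forall>t\<in>T. \<forall>x0\<in>V. \<forall>x. t0 \<le> t \<longrightarrow> is_solution T F t0 x \<longrightarrow> x t0 = x0 \<longrightarrow>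
           norm (x t) \<le> K * exp (- \<alpha> * (t - t0)) * norm x0))"

definition stability_set :: "real set \<Rightarrow> complex set" where
  "stability_set T = {c. uniformly_exp_stable T (\<lambda>z::complex. c * z)}"

definition spec :: "real^'n^'n \<Rightarrow> complex set" where
  "spec A = {c. \<exists>v::complex^'n. v \<noteq> 0 \<and>
      (\<chi> i j. complex_of_real (A $ i $ j)) *v v = (\<chi> i. c * v $ i)}"

end

theory Submission
  imports Defs "HOL-Computational_Algebra.Fundamental_Theorem_Algebra"
begin


section \<open>Time scale basics\<close>

locale tscale =
  fixes T :: "real set"
  assumes clT: "closed T" and ubT: "\<not> bdd_above T"
begin

lemma above_ne: "{s\<in>T. s > t} \<noteq> {}"
  using ubT unfolding bdd_above_def by (auto simp: not_le)

lemma sigma_eq: "sigma T t = Inf {s\<in>T. s > t}"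
  unfolding sigma_def by (rule if_not_P[OF above_ne])

lemma sigma_ge: "t \<le> sigma T t"
  unfolding sigma_eq by (rule cInf_greatest[OF above_ne]) auto

lemma sigma_le: "s \<in> T \<Longrightarrow> t < s \<Longrightarrow> sigma T t \<le> s"
  unfolding sigma_eq by (rule cInf_lower) (auto intro: bdd_belowI[of _ t])

lemma sigma_in: "sigma T t \<in> T"
  unfolding sigma_eq
  by (rule closed_subset_contains_Inf[OF clT _ above_ne]) (auto intro: bdd_belowI[of _ t])

lemma no_between: "s \<in> T \<Longrightarrow> t < s \<Longrightarrow> s < sigma T t \<Longrightarrow> False"
  using sigma_le by force

lemma sigma_mono: "t1 \<le> t2 \<Longrightarrow> sigma T t1 \<le> sigma T t2"
proof -
  assume "t1 \<le> t2"
  show ?thesis unfolding sigma_eq[of t2]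
    by (rule cInf_greatest[OF above_ne]) (use \<open>t1 \<le> t2\<close> sigma_le in auto)
qed

lemma mono_sigma: "mono (sigma T)"
  using sigma_mono by (auto simp: mono_def)

lemma rd_points: assumes "sigma T t = t" "e > 0" shows "\<exists>s\<in>T. t < s \<and> s < t + e"
proof (rule ccontr)
  assume "\<not> ?thesis"
  then have "\<forall>s\<in>{s\<in>T. s > t}. t + e \<le> s" by (auto simp: not_less)
  then have "t + e \<le> sigma T t" unfolding sigma_eq by (intro cInf_greatest[OF above_ne]) auto
  with assms show False by simp
qed

lemma sigma_restrict: "t0 \<le> t \<Longrightarrow> sigma (T \<inter> {t0..}) t = sigma T t"
proof -
  assume "t0 \<le> t"
  then have "{s \<in> T \<inter> {t0..}. s > t} = {s\<in>T. s > t}" by auto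
  then show ?thesis unfolding sigma_def by (simp only:)
qed

lemma ts_induct:
  assumes t0: "t0 \<in> T" and P0: "P t0"
    and rs: "\<And>t. t \<in> T \<Longrightarrow> t0 \<le> t \<Longrightarrow> t < sigma T t \<Longrightarrow> P t \<Longrightarrow> P (sigma T t)"
    and rd: "\<And>t. t \<in> T \<Longrightarrow> t0 \<le> t \<Longrightarrow> sigma T t = t \<Longrightarrow> P t \<Longrightarrow> \<exists>d>0. \<forall>s\<in>T. t < s \<and> s < t + d \<longrightarrow> P s"
    and ld: "\<And>t. t \<in> T \<Longrightarrow> t0 < t \<Longrightarrow> (\<forall>d>0. \<exists>s\<in>T. t - d < s \<and> s < t) \<Longrightarrow>
               (\<forall>s\<in>T. t0 \<le> s \<and> s < t \<longrightarrow> P s) \<Longrightarrow> P t"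
    and t: "t \<in> T" "t0 \<le> t"
  shows "P t"
proof (rule ccontr)
  assume nP: "\<not> P t"
  define F where "F = {s\<in>T. t0 \<le> s \<and> \<not> P s}"
  have Fne: "F \<noteq> {}" using t nP by (auto simp: F_def)
  have Fbdd: "bdd_below F" by (auto simp: F_def intro: bdd_belowI[of _ t0])
  define u where "u = Inf F"
  have uT: "u \<in> T" unfolding u_def
    by (rule closed_subset_contains_Inf[OF clT _ Fne Fbdd]) (auto simp: F_def)
  have ut0: "t0 \<le> u" unfolding u_def by (rule cInf_greatest[OF Fne]) (auto simp: F_def)
  have below: "\<forall>s\<in>T. t0 \<le> s \<and> s < u \<longrightarrow> P s"
  proof (intro ballI impI)
    fix s assume "s \<in> T" "t0 \<le> s \<and> s < u"
    show "P s"
    proof (rule ccontr)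
      assume "\<not> P s" then have "s \<in> F" using \<open>s\<in>T\<close> \<open>t0 \<le> s \<and> s < u\<close> by (auto simp: F_def)
      then have "u \<le> s" unfolding u_def by (rule cInf_lower[OF _ Fbdd])
      with \<open>t0 \<le> s \<and> s < u\<close> show False by simp
    qed
  qed
  have Pu: "P u"
  proof (cases "u = t0")
    case True then show ?thesis using P0 by simp
  next
    case False
    then have ut: "t0 < u" using ut0 by simp
    show ?thesis
    proof (cases "\<forall>d>0. \<exists>s\<in>T. u - d < s \<and> s < u")
      case True
      show ?thesis by (rule ld[OF uT ut True below])
    next
      case False
      then obtain d where d: "d > 0" "\<forall>s\<in>T. \<not>(u - d < s \<and> s < u)" by auto
      define S where "S = T \<inter> {t0..u}"
      have S1: "S \<inter> {s. s < u} = T \<inter> {t0..u-d}" using d by (auto simp: S_def)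
      define r where "r = Sup (T \<inter> {t0..u-d} \<union> {t0})"
      have rin: "r \<in> T \<inter> {t0..u-d} \<union> {t0}" unfolding r_def
        by (rule closed_contains_Sup) (simp_all add: closed_Int clT)
      have rT: "r \<in> T" using rin t0 by auto
      have rge: "t0 \<le> r" unfolding r_def by (rule cSup_upper) auto
      have rlt: "r < u" using rin d ut by auto
      have Pr: "P r" using below rT rge rlt by auto
      have nob: "\<And>s. s \<in> T \<Longrightarrow> r < s \<Longrightarrow> s < u \<Longrightarrow> False"
      proof -
        fix s assume s: "s \<in> T" "r < s" "s < u"
        show False
        proof (cases "s \<le> u - d")
          case True
          then have "s \<le> r" unfolding r_def using s rge by (intro cSup_upper) auto
          with s show False by simp
        next
          case False with d s show False by auto
        qed
      qed
      have "sigma T r \<le> u" using sigma_le[OF uT rlt] .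
      moreover have "sigma T r \<noteq> r"
      proof
        assume "sigma T r = r"
        from rd_points[OF this, of "u - r"] rlt obtain s where "s\<in>T" "r < s" "s < u" by auto
        then show False using nob by blast
      qed
      then have "r < sigma T r" using sigma_ge[of r] by simp
      moreover have "\<not> sigma T r < u" using nob[OF sigma_in] \<open>r < sigma T r\<close> by blast
      ultimately have "sigma T r = u" by simp
      then show ?thesis using rs[OF rT rge \<open>r < sigma T r\<close> Pr] by simp
    qed
  qed
  have uF: "u \<notin> F" using Pu by (auto simp: F_def)
  have approx: "\<exists>f\<in>F. u < f \<and> f < u + e" if "e > 0" for e
  proof -
    have "Inf F < u + e" using that by (simp add: u_def)
    then obtain f where "f \<in> F" "f < u + e" using cInf_lessD[OF Fne] by blast
    moreover have "u \<le> f" unfolding u_def by (rule cInf_lower[OF \<open>f\<in>F\<close> Fbdd])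
    moreover have "f \<noteq> u" using uF \<open>f\<in>F\<close> by auto
    ultimately show ?thesis by force
  qed
  show False
  proof (cases "sigma T u = u")
    case True
    from rd[OF uT ut0 True Pu] obtain d where d: "d > 0" "\<forall>s\<in>T. u < s \<and> s < u + d \<longrightarrow> P s" by auto
    from approx[OF d(1)] obtain f where "f\<in>F" "u < f" "f < u + d" by auto
    then show False using d(2) by (auto simp: F_def)
  next
    case False
    then have lt: "u < sigma T u" using sigma_ge[of u] by simp
    have Ps: "P (sigma T u)" using rs[OF uT ut0 lt Pu] .
    from approx[of "sigma T u - u"] lt obtain f where f: "f\<in>F" "u < f" "f < sigma T u" by auto
    then show False using no_between[of f u] by (auto simp: F_def)
  qed
qed

end

section \<open>Delta derivative algebra\<close>

lemma dd_mono:
  assumes "has_delta_derivative S f v t" "S' \<subseteq> S" "sigma S' t = sigma S t"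
  shows "has_delta_derivative S' f v t"
  using assms unfolding has_delta_derivative_def by (metis subsetD)

lemma dd_linear:
  assumes L: "bounded_linear L" and d: "has_delta_derivative S f v t"
  shows "has_delta_derivative S (\<lambda>x. L (f x)) (L v) t"
  unfolding has_delta_derivative_def
proof (intro allI impI)
  fix e :: real assume e: "e > 0"
  obtain K where K: "K > 0" "\<And>x. norm (L x) \<le> norm x * K"
    using bounded_linear.pos_bounded[OF L] by blast
  from d e K obtain d where d: "d > 0" "\<forall>s\<in>S. \<bar>s - t\<bar> < d \<longrightarrow>
      norm (f (sigma S t) - f s - (sigma S t - s) *\<^sub>R v) \<le> (e / K) * \<bar>sigma S t - s\<bar>"
    unfolding has_delta_derivative_def by (meson divide_pos_pos)
  show "\<exists>d>0. \<forall>s\<in>S. \<bar>s - t\<bar> < d \<longrightarrow>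
      norm (L (f (sigma S t)) - L (f s) - (sigma S t - s) *\<^sub>R L v) \<le> e * \<bar>sigma S t - s\<bar>"
  proof (intro exI[of _ d] conjI ballI impI)
    fix s assume "s \<in> S" "\<bar>s - t\<bar> < d"
    have "L (f (sigma S t)) - L (f s) - (sigma S t - s) *\<^sub>R L v
          = L (f (sigma S t) - f s - (sigma S t - s) *\<^sub>R v)"
      using L by (simp add: linear_simps bounded_linear.linear)
    also have "norm \<dots> \<le> norm (f (sigma S t) - f s - (sigma S t - s) *\<^sub>R v) * K" by (rule K)
    also have "\<dots> \<le> (e / K) * \<bar>sigma S t - s\<bar> * K"
      using d \<open>s\<in>S\<close> \<open>\<bar>s - t\<bar> < d\<close> K by (intro mult_right_mono) auto
    also have "\<dots> = e * \<bar>sigma S t - s\<bar>" using K by simp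
    finally show "norm (L (f (sigma S t)) - L (f s) - (sigma S t - s) *\<^sub>R L v) \<le> e * \<bar>sigma S t - s\<bar>" .
  qed (use d in auto)
qed

lemma dd_add:
  assumes d1: "has_delta_derivative S f v t" and d2: "has_delta_derivative S g w t"
  shows "has_delta_derivative S (\<lambda>x. f x + g x) (v + w) t"
  unfolding has_delta_derivative_def
proof (intro allI impI)
  fix e :: real assume e: "e > 0"
  from d1 e obtain a where a: "a > 0" "\<forall>s\<in>S. \<bar>s - t\<bar> < a \<longrightarrow>
      norm (f (sigma S t) - f s - (sigma S t - s) *\<^sub>R v) \<le> (e/2) * \<bar>sigma S t - s\<bar>"
    unfolding has_delta_derivative_def by (meson half_gt_zero)
  from d2 e obtain b where b: "b > 0" "\<forall>s\<in>S. \<bar>s - t\<bar> < b \<longrightarrow>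
      norm (g (sigma S t) - g s - (sigma S t - s) *\<^sub>R w) \<le> (e/2) * \<bar>sigma S t - s\<bar>"
    unfolding has_delta_derivative_def by (meson half_gt_zero)
  show "\<exists>d>0. \<forall>s\<in>S. \<bar>s - t\<bar> < d \<longrightarrow>
      norm (f (sigma S t) + g (sigma S t) - (f s + g s) - (sigma S t - s) *\<^sub>R (v + w)) \<le> e * \<bar>sigma S t - s\<bar>"
  proof (intro exI[of _ "min a b"] conjI ballI impI)
    fix s assume s: "s \<in> S" "\<bar>s - t\<bar> < min a b"
    have "f (sigma S t) + g (sigma S t) - (f s + g s) - (sigma S t - s) *\<^sub>R (v + w) =
      (f (sigma S t) - f s - (sigma S t - s) *\<^sub>R v) + (g (sigma S t) - g s - (sigma S t - s) *\<^sub>R w)"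
      by (simp add: algebra_simps)
    also have "norm \<dots> \<le> (e/2) * \<bar>sigma S t - s\<bar> + (e/2) * \<bar>sigma S t - s\<bar>"
      using a b s by (intro norm_triangle_le add_mono) auto
    finally show "norm (f (sigma S t) + g (sigma S t) - (f s + g s) - (sigma S t - s) *\<^sub>R (v + w)) \<le> e * \<bar>sigma S t - s\<bar>"
      by simp
  qed (use a b in auto)
qed

lemma dd_cmult:
  fixes c :: "'a::real_normed_field"
  assumes "has_delta_derivative S f v t"
  shows "has_delta_derivative S (\<lambda>x. c * f x) (c * v) t"
  using dd_linear[OF bounded_linear_mult_right assms] .

lemma dd_minus:
  assumes "has_delta_derivative S f v t"
  shows "has_delta_derivative S (\<lambda>x. - f x) (- v) t"
  using dd_linear[OF bounded_linear_minus[OF bounded_linear_ident] assms] by simp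

lemma dd_diff:
  assumes "has_delta_derivative S f v t" "has_delta_derivative S g w t"
  shows "has_delta_derivative S (\<lambda>x. f x - g x) (v - w) t"
  using dd_add[OF assms(1) dd_minus[OF assms(2)]] by simp

lemma dd_cont:
  assumes d: "has_delta_derivative S f v t" and tS: "t \<in> S" and e: "e > 0"
  shows "\<exists>d>0. \<forall>s\<in>S. \<bar>s - t\<bar> < d \<longrightarrow> norm (f s - f t) \<le> e"
proof -
  define \<mu> where "\<mu> = sigma S t - t"
  define e1 where "e1 = e / (2 * (2 * \<bar>\<mu>\<bar> + 1))"
  have e1: "e1 > 0" using e by (simp add: e1_def)
  from d e1 obtain a where a: "a > 0" "\<forall>s\<in>S. \<bar>s - t\<bar> < a \<longrightarrow>
      norm (f (sigma S t) - f s - (sigma S t - s) *\<^sub>R v) \<le> e1 * \<bar>sigma S t - s\<bar>"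
    unfolding has_delta_derivative_def by blast
  define d where "d = min (min a 1) (e / (2 * (norm v + e1 + 1)))"
  have "norm v + e1 + 1 > 0" using e1 by (smt (verit) norm_ge_zero)
  then have dpos: "d > 0" using a e by (simp add: d_def)
  show ?thesis
  proof (intro exI[of _ d] conjI ballI impI dpos)
    fix s assume s: "s \<in> S" "\<bar>s - t\<bar> < d"
    have h1: "norm (f (sigma S t) - f s - (sigma S t - s) *\<^sub>R v) \<le> e1 * \<bar>sigma S t - s\<bar>"
      using a s by (auto simp: d_def)
    have h2: "norm (f (sigma S t) - f t - (sigma S t - t) *\<^sub>R v) \<le> e1 * \<bar>sigma S t - t\<bar>"
      using a tS by auto
    have eq: "f s - f t = (f (sigma S t) - f t - (sigma S t - t) *\<^sub>R v)
       - (f (sigma S t) - f s - (sigma S t - s) *\<^sub>R v) + (s - t) *\<^sub>R v"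
      by (simp add: algebra_simps)
    have "norm (f s - f t) \<le> e1 * \<bar>sigma S t - t\<bar> + e1 * \<bar>sigma S t - s\<bar> + \<bar>s - t\<bar> * norm v"
      unfolding eq by (rule order_trans[OF norm_triangle_ineq] , rule add_mono,
          rule order_trans[OF norm_triangle_ineq4], use h1 h2 in auto)
    also have "\<dots> \<le> e1 * (2 * \<bar>\<mu>\<bar> + 1) + \<bar>s - t\<bar> * (norm v + e1)"
    proof -
      have "\<bar>sigma S t - s\<bar> \<le> \<bar>\<mu>\<bar> + \<bar>s - t\<bar>" by (simp add: \<mu>_def)
      then have "e1 * \<bar>sigma S t - s\<bar> \<le> e1 * (\<bar>\<mu>\<bar> + \<bar>s - t\<bar>)" using e1 by (intro mult_left_mono) auto
      moreover have "\<bar>s - t\<bar> \<le> 1" using s by (auto simp: d_def)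
      ultimately show ?thesis using e1 by (simp add: \<mu>_def algebra_simps)
    qed
    also have "\<dots> \<le> e / 2 + e / 2"
    proof (rule add_mono)
      show "e1 * (2 * \<bar>\<mu>\<bar> + 1) \<le> e / 2" using e by (simp add: e1_def field_simps)
      have "\<bar>s - t\<bar> \<le> e / (2 * (norm v + e1 + 1))" using s by (auto simp: d_def)
      then have "\<bar>s - t\<bar> * (norm v + e1) \<le> e / (2 * (norm v + e1 + 1)) * (norm v + e1)"
        using e1 by (intro mult_right_mono) auto
      also have "\<dots> = (e/2) * ((norm v + e1)/(norm v + e1 + 1))" by simp
      also have "\<dots> \<le> (e/2) * 1"
        using e e1 by (intro mult_left_mono) (auto simp: divide_le_eq_1 add_nonneg_pos)
      finally show "\<bar>s - t\<bar> * (norm v + e1) \<le> e / 2" by simp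
    qed
    finally show "norm (f s - f t) \<le> e" by simp
  qed
qed


lemma le_zero_eps: assumes "\<And>e::real. e > 0 \<Longrightarrow> x \<le> e * c" "c \<ge> 0" shows "x \<le> 0"
proof (rule ccontr)
  assume "\<not> x \<le> 0"
  then have x: "x > 0" by simp
  have "x \<le> (x / (2*(c+1))) * c" using assms(1)[of "x / (2*(c+1))"] x assms(2) by simp
  also have "\<dots> < x" using x assms(2) by (simp add: field_simps add_nonneg_pos mult_nonneg_nonneg)
  finally show False by simp
qed

lemma dd_rs:
  assumes d: "has_delta_derivative S f v t" and tS: "t \<in> S"
  shows "f (sigma S t) = f t + (sigma S t - t) *\<^sub>R v"
proof -
  have "norm (f (sigma S t) - f t - (sigma S t - t) *\<^sub>R v) \<le> 0"
  proof (rule le_zero_eps[of _ "\<bar>sigma S t - t\<bar>"])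
    fix e :: real assume "e > 0"
    with d obtain d where "d > 0" "\<forall>s\<in>S. \<bar>s - t\<bar> < d \<longrightarrow>
      norm (f (sigma S t) - f s - (sigma S t - s) *\<^sub>R v) \<le> e * \<bar>sigma S t - s\<bar>"
      unfolding has_delta_derivative_def by blast
    then show "norm (f (sigma S t) - f t - (sigma S t - t) *\<^sub>R v) \<le> e * \<bar>sigma S t - t\<bar>"
      using tS by auto
  qed simp
  then show ?thesis by (simp add: algebra_simps)
qed

definition sol_inh :: "real set \<Rightarrow> complex \<Rightarrow> (real \<Rightarrow> complex) \<Rightarrow> real \<Rightarrow> (real \<Rightarrow> complex) \<Rightarrow> bool" where
  "sol_inh T l f t0 y \<longleftrightarrow> (\<forall>t\<in>T. t0 \<le> t \<longrightarrow> has_delta_derivative (T \<inter> {t0..}) y (l * y t + f t) t)"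

context tscale begin

lemma gronwall_eps:
  assumes t1: "t1 \<in> T" and sol: "sol_inh T l f t1 p" and p0: "p t1 = 0" and F: "F \<ge> 0"
    and fb: "\<forall>\<tau>\<in>T. t1 \<le> \<tau> \<and> \<tau> \<le> t \<longrightarrow> norm (f \<tau>) \<le> F"
    and t: "t \<in> T" "t1 \<le> t" and eps: "\<epsilon> > 0"
  shows "norm (p t) \<le> (F + \<epsilon>) * exp ((norm l + 1) * (t - t1)) - F"
proof -
  define c where "c = norm l + 1"
  have c: "c \<ge> 1" by (simp add: c_def)
  define E where "E = (\<lambda>\<tau>. exp (c * (\<tau> - t1)))"
  define \<psi> where "\<psi> = (\<lambda>\<tau>. (F + \<epsilon>) * E \<tau> - F)"
  have Ege: "E \<tau> \<ge> 1" if "t1 \<le> \<tau>" for \<tau> using that c by (simp add: E_def)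
  have Emono: "E a \<le> E b" if "a \<le> b" for a b using that c by (simp add: E_def mult_left_mono)
  have psimono: "\<psi> a \<le> \<psi> b" if "a \<le> b" for a b
    using Emono[OF that] F eps by (simp add: \<psi>_def mult_left_mono)
  have Estep: "E \<tau> * (1 + c * h) \<le> E (\<tau> + h)" for \<tau> h
  proof -
    have "E (\<tau> + h) = E \<tau> * exp (c * h)" by (simp add: E_def algebra_simps flip: exp_add)
    moreover have "1 + c * h \<le> exp (c * h)" by (rule exp_ge_add_one_self)
    ultimately show ?thesis by (simp add: E_def mult_left_mono)
  qed
  let ?S = "T \<inter> {t1..}"
  have DD: "has_delta_derivative ?S p (l * p \<tau> + f \<tau>) \<tau>" if "\<tau> \<in> T" "t1 \<le> \<tau>" for \<tau>
    using sol that unfolding sol_inh_def by auto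
  have "\<tau> \<le> t \<longrightarrow> norm (p \<tau>) \<le> \<psi> \<tau>" if "\<tau> \<in> T" "t1 \<le> \<tau>" for \<tau>
  proof (rule ts_induct[OF t1 _ _ _ _ that])
    show "t1 \<le> t \<longrightarrow> norm (p t1) \<le> \<psi> t1" using p0 eps by (simp add: \<psi>_def E_def)
  next
    fix \<tau> assume \<tau>: "\<tau> \<in> T" "t1 \<le> \<tau>" "\<tau> < sigma T \<tau>" and IH: "\<tau> \<le> t \<longrightarrow> norm (p \<tau>) \<le> \<psi> \<tau>"
    show "sigma T \<tau> \<le> t \<longrightarrow> norm (p (sigma T \<tau>)) \<le> \<psi> (sigma T \<tau>)"
    proof
      assume st: "sigma T \<tau> \<le> t"
      define \<mu> where "\<mu> = sigma T \<tau> - \<tau>"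
      have mu: "\<mu> > 0" using \<tau> by (simp add: \<mu>_def)
      have pt: "norm (p \<tau>) \<le> \<psi> \<tau>" using IH st \<tau> by simp
      have ft: "norm (f \<tau>) \<le> F" using fb \<tau> st by auto
      have eq: "p (sigma T \<tau>) = (1 + \<mu> * l) * p \<tau> + \<mu> * f \<tau>"
        using dd_rs[OF DD[OF \<tau>(1,2)]] \<tau> sigma_restrict[OF \<tau>(2)]
        by (simp add: \<mu>_def scaleR_conv_of_real algebra_simps)
      have "norm (p (sigma T \<tau>)) \<le> (1 + \<mu> * norm l) * norm (p \<tau>) + \<mu> * norm (f \<tau>)"
      proof -
        have "norm (1 + \<mu> * l) \<le> 1 + \<mu> * norm l"
          using norm_triangle_ineq[of 1 "\<mu> * l"] mu by (simp add: norm_mult)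
        then have "norm ((1 + \<mu> * l) * p \<tau>) \<le> (1 + \<mu> * norm l) * norm (p \<tau>)"
          by (simp add: norm_mult mult_right_mono)
        then show ?thesis unfolding eq using norm_triangle_ineq[of "(1 + \<mu> * l) * p \<tau>" "\<mu> * f \<tau>"] mu
          by (simp add: norm_mult)
      qed
      also have "\<dots> \<le> (1 + \<mu> * norm l) * \<psi> \<tau> + \<mu> * F"
        using pt ft mu by (intro add_mono mult_left_mono) auto
      also have "\<dots> \<le> \<psi> (sigma T \<tau>)"
      proof -
        have E1: "E \<tau> \<ge> 1" using Ege \<tau> by simp
        have "E \<tau> * (1 + c * \<mu>) \<le> E (sigma T \<tau>)" using Estep[of \<tau> \<mu>] by (simp add: \<mu>_def)
        then have "(F + \<epsilon>) * (E \<tau> * (1 + c * \<mu>)) \<le> (F + \<epsilon>) * E (sigma T \<tau>)"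
          using F eps by (intro mult_left_mono) auto
        moreover have "(1 + \<mu> * norm l) * \<psi> \<tau> + \<mu> * F \<le> (F + \<epsilon>) * (E \<tau> * (1 + c * \<mu>)) - F"
        proof -
          have "\<mu> * F \<le> \<mu> * ((F + \<epsilon>) * E \<tau>)"
            using E1 F eps mu by (intro mult_left_mono) (auto intro: order_trans[of _ "(F+\<epsilon>)*1"] mult_left_mono)
          moreover have "0 \<le> F * (\<mu> * norm l)" using F mu by simp
          ultimately show ?thesis by (simp add: \<psi>_def c_def algebra_simps)
        qed
        ultimately show ?thesis by (simp add: \<psi>_def)
      qed
      finally show "norm (p (sigma T \<tau>)) \<le> \<psi> (sigma T \<tau>)" .
    qed
  next
    fix \<tau> assume \<tau>: "\<tau> \<in> T" "t1 \<le> \<tau>" "sigma T \<tau> = \<tau>" and IH: "\<tau> \<le> t \<longrightarrow> norm (p \<tau>) \<le> \<psi> \<tau>"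
    show "\<exists>d>0. \<forall>s\<in>T. \<tau> < s \<and> s < \<tau> + d \<longrightarrow> s \<le> t \<longrightarrow> norm (p s) \<le> \<psi> s"
    proof (cases "\<tau> < t")
      case False
      then show ?thesis by (intro exI[of _ 1]) auto
    next
      case True
      have pt: "norm (p \<tau>) \<le> \<psi> \<tau>" using IH True by simp
      have ft: "norm (f \<tau>) \<le> F" using fb \<tau> True by auto
      have sig: "sigma ?S \<tau> = \<tau>" using sigma_restrict[OF \<tau>(2)] \<tau>(3) by simp
      from DD[OF \<tau>(1,2)] eps obtain d where d: "d > 0" "\<forall>s\<in>?S. \<bar>s - \<tau>\<bar> < d \<longrightarrow>
          norm (p \<tau> - p s - (\<tau> - s) *\<^sub>R (l * p \<tau> + f \<tau>)) \<le> \<epsilon> * \<bar>\<tau> - s\<bar>"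
        unfolding has_delta_derivative_def sig by blast
      show ?thesis
      proof (intro exI[of _ d] conjI ballI impI d(1))
        fix s assume s: "s \<in> T" "\<tau> < s \<and> s < \<tau> + d" "s \<le> t"
        define h where "h = s - \<tau>"
        have h: "h > 0" using s by (simp add: h_def)
        have r: "norm (p \<tau> - p s - (\<tau> - s) *\<^sub>R (l * p \<tau> + f \<tau>)) \<le> \<epsilon> * h"
        proof -
          have "s \<in> ?S" "\<bar>s - \<tau>\<bar> < d" using s \<tau> by auto
          with d(2) have "norm (p \<tau> - p s - (\<tau> - s) *\<^sub>R (l * p \<tau> + f \<tau>)) \<le> \<epsilon> * \<bar>\<tau> - s\<bar>" by blast
          then show ?thesis using s by (simp add: h_def)
        qed
        define R where "R = p \<tau> - p s - (\<tau> - s) *\<^sub>R (l * p \<tau> + f \<tau>)"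
        have eq: "p s = (p \<tau> + h * (l * p \<tau> + f \<tau>)) - R"
          by (simp add: R_def h_def scaleR_conv_of_real algebra_simps)
        have "norm (p s) \<le> norm (p \<tau> + h * (l * p \<tau> + f \<tau>)) + \<epsilon> * h"
        proof -
          have rR: "norm R \<le> \<epsilon> * h" using r by (simp add: R_def)
          show ?thesis using rR norm_triangle_ineq4[of "p \<tau> + h * (l * p \<tau> + f \<tau>)" R]
            by (subst eq) linarith
        qed
        also have "norm (p \<tau> + h * (l * p \<tau> + f \<tau>)) \<le> norm (p \<tau>) + h * (norm l * norm (p \<tau>) + norm (f \<tau>))"
        proof -
          have "norm (l * p \<tau> + f \<tau>) \<le> norm l * norm (p \<tau>) + norm (f \<tau>)"
            using norm_triangle_ineq[of "l * p \<tau>" "f \<tau>"] by (simp add: norm_mult)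
          then have "norm (h * (l * p \<tau> + f \<tau>)) \<le> h * (norm l * norm (p \<tau>) + norm (f \<tau>))"
            using h by (simp add: norm_mult mult_left_mono)
          then show ?thesis using norm_triangle_ineq[of "p \<tau>" "h * (l * p \<tau> + f \<tau>)"] by linarith
        qed
        finally have "norm (p s) \<le> norm (p \<tau>) + h * (norm l * norm (p \<tau>) + norm (f \<tau>)) + \<epsilon> * h" by simp
        also have "\<dots> \<le> \<psi> \<tau> + h * (norm l * ((F + \<epsilon>) * E \<tau>) + F) + \<epsilon> * h"
        proof -
          have "\<psi> \<tau> \<le> (F + \<epsilon>) * E \<tau>" using F by (simp add: \<psi>_def)
          then have "norm l * norm (p \<tau>) \<le> norm l * ((F + \<epsilon>) * E \<tau>)"
            using pt by (intro mult_left_mono) auto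
          then have "h * (norm l * norm (p \<tau>) + norm (f \<tau>)) \<le> h * (norm l * ((F + \<epsilon>) * E \<tau>) + F)"
            using ft h by (intro mult_left_mono) auto
          then show ?thesis using pt by linarith
        qed
        also have "\<dots> \<le> \<psi> s"
        proof -
          have E1: "E \<tau> \<ge> 1" using Ege \<tau> by simp
          have "E \<tau> * (1 + c * h) \<le> E s" using Estep[of \<tau> h] by (simp add: h_def)
          then have "(F + \<epsilon>) * (E \<tau> * (1 + c * h)) \<le> (F + \<epsilon>) * E s"
            using F eps by (intro mult_left_mono) auto
          moreover have "h * (F + \<epsilon>) \<le> h * ((F + \<epsilon>) * E \<tau>)"
            using E1 F eps h by (intro mult_left_mono) (auto intro: order_trans[of _ "(F+\<epsilon>)*1"] mult_left_mono)
          ultimately show ?thesis by (simp add: \<psi>_def c_def algebra_simps)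
        qed
        finally show "norm (p s) \<le> \<psi> s" .
      qed
    qed
  next
    fix \<tau> assume \<tau>: "\<tau> \<in> T" "t1 < \<tau>" and ldn: "\<forall>d>0. \<exists>s\<in>T. \<tau> - d < s \<and> s < \<tau>"
      and IH: "\<forall>s\<in>T. t1 \<le> s \<and> s < \<tau> \<longrightarrow> s \<le> t \<longrightarrow> norm (p s) \<le> \<psi> s"
    show "\<tau> \<le> t \<longrightarrow> norm (p \<tau>) \<le> \<psi> \<tau>"
    proof
      assume "\<tau> \<le> t"
      show "norm (p \<tau>) \<le> \<psi> \<tau>"
      proof (rule field_le_epsilon)
        fix \<eta> :: real assume "\<eta> > 0"
        from dd_cont[OF DD[of \<tau>] _ this] \<tau> obtain d where d: "d > 0"
          "\<forall>s\<in>?S. \<bar>s - \<tau>\<bar> < d \<longrightarrow> norm (p s - p \<tau>) \<le> \<eta>" by auto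
        from ldn[rule_format, of "min d (\<tau> - t1)"] d \<tau> obtain s where s: "s \<in> T" "\<tau> - min d (\<tau> - t1) < s" "s < \<tau>"
          by auto
        have "norm (p \<tau>) \<le> norm (p s) + \<eta>"
        proof -
          have "t1 \<le> s" "\<tau> - s < d" using s by auto
          then have "norm (p \<tau> - p s) \<le> \<eta>" using d(2)[rule_format, of s] s by (auto simp: norm_minus_commute)
          then show ?thesis using norm_triangle_ineq2[of "p \<tau>" "p s"] by linarith
        qed
        also have "norm (p s) \<le> \<psi> s" using IH s \<open>\<tau> \<le> t\<close> by auto
        also have "\<psi> s \<le> \<psi> \<tau>" using psimono s by simp
        finally show "norm (p \<tau>) \<le> \<psi> \<tau> + \<eta>" by simp
      qed
    qed
  qed
  from this[OF t] t show ?thesis by (simp add: \<psi>_def E_def c_def)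
qed

lemma gronwall:
  assumes t1: "t1 \<in> T" and sol: "sol_inh T l f t1 p" and p0: "p t1 = 0" and F: "F \<ge> 0"
    and fb: "\<forall>\<tau>\<in>T. t1 \<le> \<tau> \<and> \<tau> \<le> t \<longrightarrow> norm (f \<tau>) \<le> F"
    and t: "t \<in> T" "t1 \<le> t"
  shows "norm (p t) \<le> F * exp ((norm l + 1) * (t - t1))"
proof -
  define E where "E = exp ((norm l + 1) * (t - t1))"
  have E: "E > 0" by (simp add: E_def)
  have "norm (p t) \<le> F * E + e" if "e > 0" for e
  proof -
    have "norm (p t) \<le> (F + e / E) * E - F"
      using gronwall_eps[OF t1 sol p0 F fb t, of "e/E"] that E by (simp add: E_def)
    also have "\<dots> \<le> F * E + e" using E F by (simp add: field_simps)
    finally show ?thesis .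
  qed
  then show ?thesis unfolding E_def by (rule field_le_epsilon)
qed

end


lemma norm_exp_sub_le:
  fixes z :: complex
  assumes "norm z \<le> 1/2"
  shows "norm (exp z - 1 - z) \<le> norm z ^ 2"
proof (cases "z = 0")
  case True then show ?thesis by simp
next
  case False
  have sums: "(\<lambda>k. z ^ (k + 2) /\<^sub>R fact (k + 2)) sums (exp z - (\<Sum>k<2. z ^ k /\<^sub>R fact k))"
    by (intro sums_split_initial_segment exp_converges)
  have "summable (\<lambda>k. norm z ^ (k + 2) /\<^sub>R fact (k + 2))"
    using summable_norm_exp[of z]
    by (intro summable_norm summable_ignore_initial_segment)
       (auto simp: norm_power norm_divide divide_simps)
  also have "?this \<longleftrightarrow> summable (\<lambda>k. norm z ^ 2 * (norm z ^ k / fact (k +2)))"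
    by (simp add: power_add mult_ac divide_simps power2_eq_square del: of_nat_Suc of_nat_add)
  also have "\<dots> \<longleftrightarrow> summable (\<lambda>k. norm z ^ k / fact (k + 2))"
    by (subst summable_cmult_iff) (use \<open>z \<noteq> 0\<close> in auto)
  finally have summable: "summable (\<lambda>k. norm z ^ k / fact (k + 2))" .
  have "exp z - 1 - z = (\<Sum>k. z ^ (k + 2) / fact (k + 2))"
    using sums by (simp add: sums_iff scaleR_conv_of_real divide_simps eval_nat_numeral)
  also have "norm \<dots> \<le> (\<Sum>k. norm (z ^ (k + 2) / fact (k + 2)))"
    using summable_norm_exp[of z]
    by (intro summable_norm summable_ignore_initial_segment)
       (auto simp: norm_power norm_divide divide_simps)
  also have "\<dots> = (\<Sum>k. norm z ^ 2 * (norm z ^ k / fact (k + 2)))"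
    by (simp add: power_add norm_power norm_divide mult_ac norm_mult power2_eq_square del: of_nat_Suc)
  also have "\<dots> = norm z ^ 2 * (\<Sum>k. norm z ^ k / fact (k + 2))"
    using summable by (rule suminf_mult)
  also have "\<dots> \<le> norm z ^ 2 * (1 / (1 - norm z) / 2)"
  proof (intro mult_left_mono, rule sums_le)
    show "(\<lambda>k. norm z ^ k / fact (k + 2)) sums (\<Sum>k. norm z ^ k / fact (k + 2))"
      using summable by blast
    show "(\<lambda>k. norm z ^ k / 2) sums (1 / (1 - norm z) / 2)"
      using assms by (intro geometric_sums sums_divide) auto
  next
    fix k :: nat
    have "norm z ^ k / fact (k + 2) \<le> norm z ^ k / fact 2"
      by (intro divide_left_mono fact_mono) auto
    thus "norm z ^ k / fact (k + 2) \<le> norm z ^ k / 2"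
      by simp
  qed (auto simp: divide_simps)
  also have "\<dots> \<le> norm z ^ 2 * 1"
    using assms by (intro mult_left_mono) (auto simp: field_simps)
  finally show ?thesis by simp
qed

lemma norm_Ln_sub_le:
  fixes w :: complex
  assumes "norm w \<le> 1/2"
  shows "norm (Ln (1 + w) - w) \<le> 2 * norm w ^ 2"
proof -
  have "norm (Ln (1 + w) - w) \<le> norm w ^ 2 / (1 - norm w)"
    using Ln_approx_linear[of w] assms by simp
  also have "\<dots> \<le> norm w ^ 2 / (1/2)"
    using assms by (intro divide_left_mono) auto
  finally show ?thesis by simp
qed

lemma finite_separated:
  fixes S :: "real set"
  assumes "S \<subseteq> {a..b}" "c > 0" "\<And>x y. x \<in> S \<Longrightarrow> y \<in> S \<Longrightarrow> x < y \<Longrightarrow> c \<le> y - x"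
  shows "finite S"
proof -
  define f where "f = (\<lambda>x. \<lfloor>(x - a) / c\<rfloor>)"
  have inj: "inj_on f S"
  proof (rule inj_onI)
    fix x y assume xy: "x \<in> S" "y \<in> S" "f x = f y"
    have "\<bar>(x - a)/c - (y - a)/c\<bar> < 1" using xy(3) unfolding f_def by linarith
    then have "\<bar>x - y\<bar> < c" using assms(2) by (simp add: field_simps abs_less_iff)
    then show "x = y" using assms(3)[OF xy(1,2)] assms(3)[OF xy(2,1)] by (cases x y rule: linorder_cases) auto
  qed
  have "f ` S \<subseteq> {0..\<lceil>(b - a)/c\<rceil>}"
  proof
    fix k assume "k \<in> f ` S"
    then obtain x where x: "x \<in> S" "k = f x" by auto
    then have "a \<le> x" "x \<le> b" using assms(1) by auto
    then show "k \<in> {0..\<lceil>(b - a)/c\<rceil>}" using assms(2) x unfolding f_def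
      by (auto intro!: floor_le_ceiling[THEN order_trans] divide_right_mono ceiling_mono)
  qed
  then have "finite (f ` S)" using finite_subset by blast
  then show ?thesis using inj finite_imageD by blast
qed

section \<open>Construction of the exponential function\<close>

definition lft :: "real set \<Rightarrow> real \<Rightarrow> real \<Rightarrow> real" where
  "lft T s r = Sup {\<tau>\<in>T. \<tau> \<le> max r s}"

definition gm :: "real set \<Rightarrow> real \<Rightarrow> real \<Rightarrow> real" where
  "gm T s r = sigma T (lft T s r) - lft T s r"

definition cc :: "complex \<Rightarrow> real" where
  "cc l = 1 / (4 * norm l + 1)"

definition HH :: "complex \<Rightarrow> real \<Rightarrow> complex" where
  "HH l m = (if m \<in> {0<..<cc l} then Ln (1 + of_real m * l) / of_real m else if m \<in> {0} then l else 0)"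

definition gfun :: "real set \<Rightarrow> complex \<Rightarrow> real \<Rightarrow> real \<Rightarrow> complex" where
  "gfun T l s r = HH l (gm T s r)"

definition Big :: "real set \<Rightarrow> complex \<Rightarrow> real set" where
  "Big T l = {\<tau>\<in>T. cc l \<le> sigma T \<tau> - \<tau>}"

definition PP :: "real set \<Rightarrow> complex \<Rightarrow> real \<Rightarrow> real \<Rightarrow> complex" where
  "PP T l s t = (\<Prod>\<tau>\<in>Big T l \<inter> {s..<t}. 1 + of_real (sigma T \<tau> - \<tau>) * l)"

definition ee :: "real set \<Rightarrow> complex \<Rightarrow> real \<Rightarrow> real \<Rightarrow> complex" where
  "ee T l s t = exp (integral {s..t} (gfun T l s)) * PP T l s t"

lemma cc_pos: "cc l > 0" by (simp add: cc_def add_nonneg_pos)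

lemma cc_norm: "cc l * norm l \<le> 1/4"
proof -
  have "0 < 4 * norm l + 1" by (simp add: add_nonneg_pos)
  then show ?thesis by (simp add: cc_def field_simps)
qed

lemma cc_norm': "0 \<le> m \<Longrightarrow> m \<le> cc l \<Longrightarrow> norm (of_real m * l) \<le> 1/4"
proof -
  assume "0 \<le> m" "m \<le> cc l"
  then have "m * norm l \<le> cc l * norm l" by (intro mult_right_mono) auto
  then show ?thesis using cc_norm[of l] \<open>0 \<le> m\<close> by (simp add: norm_mult)
qed

lemma HH_bounds:
  assumes "0 \<le> m" "m < cc l"
  shows "norm (HH l m - l) \<le> 2 * norm l ^ 2 * m" "norm (HH l m) \<le> 2 * norm l"
proof -
  have w: "norm (of_real m * l) \<le> 1/4"
    using assms by (intro cc_norm') auto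
  have A: "norm (HH l m - l) \<le> 2 * norm l ^ 2 * m"
  proof (cases "m = 0")
    case True then show ?thesis by (simp add: HH_def)
  next
    case False
    then have m: "m > 0" using assms by simp
    have "HH l m - l = (Ln (1 + of_real m * l) - of_real m * l) / of_real m"
      using m assms by (simp add: HH_def field_simps)
    then have "norm (HH l m - l) = norm (Ln (1 + of_real m * l) - of_real m * l) / m"
      using m by (simp add: norm_divide)
    also have "\<dots> \<le> 2 * norm (of_real m * l) ^ 2 / m"
      using norm_Ln_sub_le[of "of_real m * l"] w m by (intro divide_right_mono) auto
    also have "\<dots> = 2 * norm l ^ 2 * m" using m by (simp add: norm_mult power2_eq_square)
    finally show ?thesis .
  qed
  show "norm (HH l m - l) \<le> 2 * norm l ^ 2 * m" by (rule A)
  have mn: "m * norm l \<le> 1/4" using mult_right_mono[of m "cc l" "norm l"] assms cc_norm[of l] by simp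
  have "2 * norm l ^ 2 * m = 2 * norm l * (m * norm l)" by (simp add: power2_eq_square)
  also have "\<dots> \<le> 2 * norm l * (1/4)"
    using mn by (intro mult_left_mono) auto
  finally have X: "2 * norm l ^ 2 * m \<le> 2 * norm l * (1/4)" .
  have "norm (HH l m - l) \<le> norm l" using A X norm_ge_zero[of l] by linarith
  then show "norm (HH l m) \<le> 2 * norm l" using norm_triangle_ineq2[of "HH l m" l] by simp
qed

lemma HH_bound_all: "m \<ge> 0 \<Longrightarrow> norm (HH l m) \<le> 2 * norm l"
  using HH_bounds(2)[of m l] by (cases "m < cc l") (auto simp: HH_def)

lemma HH_measurable: "HH l \<in> borel_measurable borel"
proof -
  define F1 where "F1 = (\<lambda>m. if m \<in> {0<..<cc l} then Ln (1 + of_real m * l) / of_real m else 0)"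
  define F2 where "F2 = (\<lambda>m::real. if m \<in> {0} then l else 0)"
  have "continuous_on {0<..<cc l} (\<lambda>m. Ln (1 + of_real m * l) / of_real m)"
  proof (intro continuous_intros)
    fix m assume m: "m \<in> {0<..<cc l}"
    have "norm (of_real m * l) \<le> 1/4"
      using m by (intro cc_norm') auto
    then have "Re (of_real m * l) \<ge> -1/4" using abs_Re_le_cmod[of "of_real m * l"] by linarith
    then have "Re (1 + of_real m * l) > 0" by simp
    then show "1 + complex_of_real m * l \<notin> \<real>\<^sub>\<le>\<^sub>0" by (simp add: complex_nonpos_Reals_iff)
  qed auto
  then have "F1 \<in> borel_measurable borel" unfolding F1_def
    by (intro borel_measurable_continuous_on_if) (auto intro: continuous_intros)
  moreover have "F2 \<in> borel_measurable borel" unfolding F2_def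
    by (intro borel_measurable_continuous_on_if) (auto intro: continuous_intros)
  ultimately have "(\<lambda>m. if m \<in> {0<..<cc l} then F1 m else F2 m) \<in> borel_measurable borel"
    by (intro measurable_If_set) auto
  also have "(\<lambda>m. if m \<in> {0<..<cc l} then F1 m else F2 m) = HH l"
    by (auto simp: F1_def F2_def HH_def fun_eq_iff)
  finally show ?thesis .
qed

context tscale begin

context
  fixes s :: real and l :: complex
  assumes sT: "s \<in> T"
begin

lemma lft_props:
  shows "lft T s r \<in> T" "lft T s r \<le> max r s" "\<And>\<tau>. \<tau> \<in> T \<Longrightarrow> \<tau> \<le> max r s \<Longrightarrow> \<tau> \<le> lft T s r"
proof -
  have ne: "{\<tau>\<in>T. \<tau> \<le> max r s} \<noteq> {}" using sT by auto
  have bd: "bdd_above {\<tau>\<in>T. \<tau> \<le> max r s}" by (auto intro: bdd_aboveI[of _ "max r s"])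
  have cl: "closed {\<tau>\<in>T. \<tau> \<le> max r s}"
    using closed_Int[OF clT closed_atMost[of "max r s"]] by (simp add: Int_def atMost_def)
  show "lft T s r \<in> T" using closed_contains_Sup[OF ne bd cl] by (simp add: lft_def)
  show "lft T s r \<le> max r s" unfolding lft_def by (rule cSup_least[OF ne]) auto
  show "\<And>\<tau>. \<tau> \<in> T \<Longrightarrow> \<tau> \<le> max r s \<Longrightarrow> \<tau> \<le> lft T s r" unfolding lft_def
    by (rule cSup_upper[OF _ bd]) auto
qed

lemma lft_mono: "mono (lft T s)"
proof (rule monoI)
  fix a b :: real assume "a \<le> b"
  show "lft T s a \<le> lft T s b"
    using lft_props(1,2)[of a] lft_props(3)[of "lft T s a" b] \<open>a \<le> b\<close> by simp
qed

lemma gm_nonneg: "gm T s r \<ge> 0"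
  using sigma_ge[of "lft T s r"] by (simp add: gm_def)

lemma gfun_bound: "norm (gfun T l s r) \<le> 2 * norm l"
  using HH_bound_all[OF gm_nonneg] by (simp add: gfun_def)

lemma gfun_measurable: "gfun T l s \<in> borel_measurable borel"
proof -
  have m1: "lft T s \<in> borel_measurable borel" by (rule borel_measurable_mono[OF lft_mono])
  have "mono (\<lambda>r. sigma T (lft T s r))"
    using lft_mono mono_sigma by (auto simp: mono_def)
  then have m2: "(\<lambda>r. sigma T (lft T s r)) \<in> borel_measurable borel" by (rule borel_measurable_mono)
  have "gm T s \<in> borel_measurable borel" unfolding gm_def[abs_def]
    using m1 m2 by measurable
  then show ?thesis unfolding gfun_def[abs_def]
    using measurable_comp[OF _ HH_measurable] by (simp add: comp_def)
qed

lemma gfun_integrable: "gfun T l s integrable_on {a..b}"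
proof -
  have "gfun T l s \<in> borel_measurable lebesgue"
    using measurable_comp[OF id_borel_measurable_lebesgue gfun_measurable] by (simp add: comp_def id_def)
  then have "gfun T l s integrable_on cbox a b"
    by (rule measurable_bounded_lemma[where g = "\<lambda>_. 2 * norm l"]) (auto intro: gfun_bound)
  then show ?thesis by simp
qed

lemma gm_le:
  assumes "u \<in> T" "v \<in> T" "s \<le> u" "u \<le> r" "r < v"
  shows "gm T s r \<le> v - u"
proof -
  have a: "u \<le> lft T s r" using lft_props(3)[of u r] assms by simp
  have b: "lft T s r < v" using lft_props(2)[of r] assms by simp
  have "sigma T (lft T s r) \<le> v" by (rule sigma_le[OF assms(2) b])
  then show ?thesis using a by (simp add: gm_def)
qed

lemma gm_gap:
  assumes "\<tau> \<in> T" "s \<le> \<tau>" "\<tau> \<le> r" "r < sigma T \<tau>"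
  shows "gm T s r = sigma T \<tau> - \<tau>"
proof -
  have "lft T s r = \<tau>"
  proof (rule antisym)
    show "\<tau> \<le> lft T s r" using lft_props(3)[of \<tau> r] assms by simp
    show "lft T s r \<le> \<tau>"
    proof (rule ccontr)
      assume "\<not> lft T s r \<le> \<tau>"
      then have "\<tau> < lft T s r" by simp
      moreover have "lft T s r \<le> r" using lft_props(2)[of r] assms by simp
      ultimately show False using no_between[OF lft_props(1)] assms by force
    qed
  qed
  then show ?thesis by (simp add: gm_def)
qed

lemma integral_close:
  assumes "u \<in> T" "v \<in> T" "s \<le> u" "u \<le> v" "v - u < cc l"
  shows "norm (integral {u..v} (gfun T l s) - of_real (v - u) * l) \<le> 2 * norm l ^ 2 * (v - u)^2"
    and "norm (integral {u..v} (gfun T l s)) \<le> 2 * norm l * (v - u)"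
proof -
  have int: "((\<lambda>r. gfun T l s r - l) has_integral (integral {u..v} (gfun T l s) - of_real (v - u) * l)) {u..v}"
    using has_integral_diff[OF integrable_integral[OF gfun_integrable] has_integral_const_real[of l u v]]
      assms by (simp add: scaleR_conv_of_real)
  have pw: "norm (gfun T l s r - l) \<le> 2 * norm l ^ 2 * (v - u)" if r: "r \<in> {u..v} - {v}" for r
  proof -
    have g: "gm T s r \<le> v - u" using gm_le[of u v r] assms r by auto
    then have "norm (HH l (gm T s r) - l) \<le> 2 * norm l ^ 2 * gm T s r"
      using HH_bounds(1)[OF gm_nonneg, of r l] assms by simp
    also have "\<dots> \<le> 2 * norm l ^ 2 * (v - u)" using g by (intro mult_left_mono) auto
    finally show "norm (gfun T l s r - l) \<le> 2 * norm l ^ 2 * (v - u)" by (simp add: gfun_def)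
  qed
  have B0: "0 \<le> 2 * norm l ^ 2 * (v - u)" using assms by simp
  have fin: "finite {v}" by simp
  have "norm (integral {u..v} (gfun T l s) - of_real (v - u) * l) \<le> 2 * norm l ^ 2 * (v - u) * (v - u)"
    using has_integral_bound_real[OF B0 fin int pw] assms by (simp add: content_real)
  then show "norm (integral {u..v} (gfun T l s) - of_real (v - u) * l) \<le> 2 * norm l ^ 2 * (v - u)^2"
    using assms by (simp add: power2_eq_square mult_ac)
  show "norm (integral {u..v} (gfun T l s)) \<le> 2 * norm l * (v - u)"
    using has_integral_bound_real[OF _ _ integrable_integral[OF gfun_integrable], of "2 * norm l" "{}" u v]
      gfun_bound assms by simp
qed

lemma integral_gap:
  assumes "\<tau> \<in> T" "s \<le> \<tau>"
  shows "integral {\<tau>..sigma T \<tau>} (gfun T l s) = of_real (sigma T \<tau> - \<tau>) * HH l (sigma T \<tau> - \<tau>)"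
proof -
  have "((\<lambda>r. gfun T l s r) has_integral ((sigma T \<tau> - \<tau>) *\<^sub>R HH l (sigma T \<tau> - \<tau>))) {\<tau>..sigma T \<tau>}"
  proof (rule has_integral_spike_finite[of "{sigma T \<tau>}"])
    fix r assume "r \<in> {\<tau>..sigma T \<tau>} - {sigma T \<tau>}"
    then show "gfun T l s r = HH l (sigma T \<tau> - \<tau>)"
      using gm_gap[of \<tau> r] assms by (auto simp: gfun_def)
  qed (use has_integral_const_real[of "HH l (sigma T \<tau> - \<tau>)" \<tau> "sigma T \<tau>"] sigma_ge[of \<tau>] in \<open>auto simp: content_real\<close>)
  then show ?thesis by (simp add: integral_unique scaleR_conv_of_real)
qed

lemma Big_finite: "finite (Big T l \<inter> {s..<t})"
proof (rule finite_separated[of _ s t, OF _ cc_pos])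
  fix x y assume "x \<in> Big T l \<inter> {s..<t}" "y \<in> Big T l \<inter> {s..<t}" "x < y"
  then show "cc l \<le> y - x" using sigma_le[of y x] by (auto simp: Big_def)
qed auto

lemma PP_const:
  assumes "u \<in> T" "v \<in> T" "s \<le> u" "u \<le> v" "v - u < cc l"
  shows "PP T l s v = PP T l s u"
proof -
  have "Big T l \<inter> {s..<v} = Big T l \<inter> {s..<u}"
  proof (intro set_eqI iffI)
    fix x assume x: "x \<in> Big T l \<inter> {s..<v}"
    show "x \<in> Big T l \<inter> {s..<u}"
    proof (rule ccontr)
      assume "x \<notin> Big T l \<inter> {s..<u}"
      then have "u \<le> x" using x by auto
      moreover have "sigma T x \<le> v" using sigma_le[of v x] x assms by auto
      ultimately show False using x assms by (auto simp: Big_def)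
    qed
  qed (use assms in auto)
  then show ?thesis by (simp add: PP_def)
qed

lemma ee_loc:
  assumes "u \<in> T" "v \<in> T" "s \<le> u" "u \<le> v" "v - u < cc l"
  shows "ee T l s v = ee T l s u * exp (integral {u..v} (gfun T l s))"
proof -
  have "integral {s..v} (gfun T l s) = integral {s..u} (gfun T l s) + integral {u..v} (gfun T l s)"
    using Henstock_Kurzweil_Integration.integral_combine[OF assms(3,4) gfun_integrable] by simp
  then show ?thesis using PP_const[OF assms] by (simp add: ee_def exp_add mult_ac)
qed

lemma ee_jump:
  assumes "\<tau> \<in> T" "s \<le> \<tau>" "\<tau> < sigma T \<tau>"
  shows "ee T l s (sigma T \<tau>) = (1 + of_real (sigma T \<tau> - \<tau>) * l) * ee T l s \<tau>"
proof (cases "sigma T \<tau> - \<tau> < cc l")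
  case True
  have "ee T l s (sigma T \<tau>) = ee T l s \<tau> * exp (integral {\<tau>..sigma T \<tau>} (gfun T l s))"
    using ee_loc[OF assms(1) sigma_in assms(2)] assms True by simp
  also have "integral {\<tau>..sigma T \<tau>} (gfun T l s) = Ln (1 + of_real (sigma T \<tau> - \<tau>) * l)"
    using integral_gap[OF assms(1,2)] assms True by (simp add: HH_def)
  also have "exp (Ln (1 + of_real (sigma T \<tau> - \<tau>) * l)) = 1 + of_real (sigma T \<tau> - \<tau>) * l"
  proof (rule exp_Ln)
    have w: "norm (of_real (sigma T \<tau> - \<tau>) * l) \<le> 1/4"
      using True assms by (intro cc_norm') auto
    show "1 + complex_of_real (sigma T \<tau> - \<tau>) * l \<noteq> 0"
    proof
      assume "1 + complex_of_real (sigma T \<tau> - \<tau>) * l = 0"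
      then have "complex_of_real (sigma T \<tau> - \<tau>) * l = -1" by (simp add: add_eq_0_iff)
      then have "norm (complex_of_real (sigma T \<tau> - \<tau>) * l) = 1" by simp
      with w show False by simp
    qed
  qed
  finally show ?thesis by (simp add: mult_ac)
next
  case False
  have int0: "integral {\<tau>..sigma T \<tau>} (gfun T l s) = 0"
    using integral_gap[OF assms(1,2)] False by (simp add: HH_def)
  have I: "integral {s..sigma T \<tau>} (gfun T l s) = integral {s..\<tau>} (gfun T l s)"
    using Henstock_Kurzweil_Integration.integral_combine[OF assms(2) _ gfun_integrable, of "sigma T \<tau>"] assms int0 by simp
  have B: "Big T l \<inter> {s..<sigma T \<tau>} = insert \<tau> (Big T l \<inter> {s..<\<tau>})"
  proof (intro set_eqI iffI)
    fix x assume x: "x \<in> Big T l \<inter> {s..<sigma T \<tau>}"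
    show "x \<in> insert \<tau> (Big T l \<inter> {s..<\<tau>})"
      using x no_between[of x \<tau>] by (cases x \<tau> rule: linorder_cases) (auto simp: Big_def)
  qed (use assms False in \<open>auto simp: Big_def\<close>)
  have "PP T l s (sigma T \<tau>) = (1 + of_real (sigma T \<tau> - \<tau>) * l) * PP T l s \<tau>"
    unfolding PP_def B by (subst prod.insert) (auto intro: Big_finite)
  then show ?thesis using I by (simp add: ee_def mult_ac)
qed

lemma ee_start: "ee T l s s = 1"
  by (simp add: ee_def PP_def)

lemma ee_key:
  assumes "u \<in> T" "t \<in> T" "s \<le> u" "s \<le> t" "\<bar>t - u\<bar> < cc l"
  shows "norm (ee T l s t - ee T l s u - (t - u) *\<^sub>R (l * ee T l s t))
           \<le> 6 * norm l ^ 2 * (t - u)^2 * norm (ee T l s t)"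
proof (cases "u \<le> t")
  case True
  define I where "I = integral {u..t} (gfun T l s)"
  have c1: "norm (I - of_real (t - u) * l) \<le> 2 * norm l ^ 2 * (t - u)^2"
    and c2: "norm I \<le> 2 * norm l * (t - u)"
    using integral_close[OF assms(1,2,3) True] assms by (auto simp: I_def)
  have Ih: "norm I \<le> 1/2"
  proof -
    have "2 * norm l * (t - u) \<le> 2 * norm l * cc l" using assms True by (intro mult_left_mono) auto
    also have "\<dots> \<le> 1/2" using cc_norm[of l] by (simp add: mult_ac)
    finally show ?thesis using c2 by simp
  qed
  have loc: "ee T l s t = ee T l s u * exp I" using ee_loc[OF assms(1,2,3) True] assms by (simp add: I_def)
  then have eu: "ee T l s u = ee T l s t * exp (- I)" by (simp add: exp_minus field_simps)
  have eq: "ee T l s t - ee T l s u - (t - u) *\<^sub>R (l * ee T l s t)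
      = ee T l s t * ((I - of_real (t - u) * l) - (exp (- I) - 1 - (- I)))"
    unfolding eu by (simp add: scaleR_conv_of_real algebra_simps)
  have "norm ((I - of_real (t - u) * l) - (exp (- I) - 1 - (- I)))
      \<le> 2 * norm l ^ 2 * (t - u)^2 + norm I ^ 2"
    using norm_triangle_ineq4[of "I - of_real (t - u) * l" "exp (- I) - 1 - (- I)"] c1
      norm_exp_sub_le[of "-I"] Ih by simp
  also have "norm I ^ 2 \<le> (2 * norm l * (t - u))^2" using c2 by (intro power_mono) auto
  finally have N: "norm ((I - of_real (t - u) * l) - (exp (- I) - 1 - (- I))) \<le> 6 * norm l ^ 2 * (t - u)^2"
    by (simp add: power_mult_distrib)
  have "norm (ee T l s t - ee T l s u - (t - u) *\<^sub>R (l * ee T l s t))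
      = norm (ee T l s t) * norm ((I - of_real (t - u) * l) - (exp (- I) - 1 - (- I)))"
    unfolding eq norm_mult ..
  also have "\<dots> \<le> norm (ee T l s t) * (6 * norm l ^ 2 * (t - u)^2)" by (rule mult_left_mono[OF N norm_ge_zero])
  also have "\<dots> = 6 * norm l ^ 2 * (t - u)^2 * norm (ee T l s t)" by (simp add: mult_ac)
  finally show ?thesis .
next
  case False
  then have ut: "t \<le> u" by simp
  define I where "I = integral {t..u} (gfun T l s)"
  have c1: "norm (I - of_real (u - t) * l) \<le> 2 * norm l ^ 2 * (u - t)^2"
    and c2: "norm I \<le> 2 * norm l * (u - t)"
    using integral_close[OF assms(2,1,4) ut] assms ut by (auto simp: I_def)
  have Ih: "norm I \<le> 1/2"
  proof -
    have "2 * norm l * (u - t) \<le> 2 * norm l * cc l" using assms ut by (intro mult_left_mono) auto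
    also have "\<dots> \<le> 1/2" using cc_norm[of l] by (simp add: mult_ac)
    finally show ?thesis using c2 by simp
  qed
  have eu: "ee T l s u = ee T l s t * exp I" using ee_loc[OF assms(2,1,4) ut] assms ut by (simp add: I_def)
  have eq: "ee T l s t - ee T l s u - (t - u) *\<^sub>R (l * ee T l s t)
      = ee T l s t * ((of_real (u - t) * l - I) - (exp I - 1 - I))"
    unfolding eu by (simp add: scaleR_conv_of_real algebra_simps)
  have "norm ((of_real (u - t) * l - I) - (exp I - 1 - I))
      \<le> 2 * norm l ^ 2 * (u - t)^2 + norm I ^ 2"
    using norm_triangle_ineq4[of "(of_real (u - t) * l - I)" "exp I - 1 - I"] c1
      norm_exp_sub_le[of "I"] Ih norm_minus_commute[of "of_real (u - t) * l" I] by simp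
  also have "norm I ^ 2 \<le> (2 * norm l * (u - t))^2" using c2 by (intro power_mono) auto
  finally have N: "norm ((of_real (u - t) * l - I) - (exp I - 1 - I)) \<le> 6 * norm l ^ 2 * (t - u)^2"
    by (simp add: power_mult_distrib power2_commute)
  have "norm (ee T l s t - ee T l s u - (t - u) *\<^sub>R (l * ee T l s t))
      = norm (ee T l s t) * norm ((of_real (u - t) * l - I) - (exp I - 1 - I))"
    unfolding eq norm_mult ..
  also have "\<dots> \<le> norm (ee T l s t) * (6 * norm l ^ 2 * (t - u)^2)" by (rule mult_left_mono[OF N norm_ge_zero])
  also have "\<dots> = 6 * norm l ^ 2 * (t - u)^2 * norm (ee T l s t)" by (simp add: mult_ac)
  finally show ?thesis .
qed

lemma ee_deriv:
  assumes t: "t \<in> T" "s \<le> t"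
  shows "has_delta_derivative (T \<inter> {s..}) (ee T l s) (l * ee T l s t) t"
  unfolding has_delta_derivative_def sigma_restrict[OF t(2)]
proof (intro allI impI)
  fix \<epsilon> :: real assume eps: "\<epsilon> > 0"
  define K where "K = 6 * norm l ^ 2 * norm (ee T l s t) + 1"
  have K: "K > 0" by (simp add: K_def add_nonneg_pos)
  define d0 where "d0 = min (cc l) (\<epsilon> / K)"
  have d0: "d0 > 0" using cc_pos[of l] eps K by (simp add: d0_def)
  have key: "norm (ee T l s t - ee T l s u - (t - u) *\<^sub>R (l * ee T l s t)) \<le> \<epsilon> * \<bar>t - u\<bar>"
    if u: "u \<in> T" "s \<le> u" "\<bar>u - t\<bar> < d0" for u
  proof -
    have "norm (ee T l s t - ee T l s u - (t - u) *\<^sub>R (l * ee T l s t))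
        \<le> 6 * norm l ^ 2 * (t - u)^2 * norm (ee T l s t)"
      using ee_key[OF u(1) t(1) u(2) t(2)] u by (auto simp: d0_def abs_minus_commute)
    also have "\<dots> = (6 * norm l ^ 2 * norm (ee T l s t)) * (\<bar>t - u\<bar> * \<bar>t - u\<bar>)"
      by (simp add: power2_eq_square abs_mult_self_eq mult_ac)
    also have "\<dots> \<le> K * (\<bar>t - u\<bar> * \<bar>t - u\<bar>)" by (rule mult_right_mono) (auto simp: K_def)
    also have "\<dots> = K * \<bar>t - u\<bar> * \<bar>t - u\<bar>" by (simp add: mult_ac)
    also have "\<dots> \<le> K * (\<epsilon> / K) * \<bar>t - u\<bar>"
      using u K by (intro mult_right_mono mult_left_mono) (auto simp: d0_def abs_minus_commute)
    also have "\<dots> = \<epsilon> * \<bar>t - u\<bar>" using K by simp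
    finally show ?thesis .
  qed
  show "\<exists>d>0. \<forall>u\<in>T \<inter> {s..}. \<bar>u - t\<bar> < d \<longrightarrow>
        norm (ee T l s (sigma T t) - ee T l s u - (sigma T t - u) *\<^sub>R (l * ee T l s t)) \<le> \<epsilon> * \<bar>sigma T t - u\<bar>"
  proof (cases "sigma T t = t")
    case True
    then show ?thesis using key d0 by (intro exI[of _ d0]) auto
  next
    case False
    then have lt: "t < sigma T t" using sigma_ge[of t] by simp
    define d where "d = min d0 (sigma T t - t)"
    show ?thesis
    proof (intro exI[of _ d] conjI ballI impI)
      show "d > 0" using d0 lt by (simp add: d_def)
      fix u assume u: "u \<in> T \<inter> {s..}" "\<bar>u - t\<bar> < d"
      have ut: "u \<le> t"
      proof (rule ccontr)
        assume "\<not> u \<le> t"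
        then have "t < u" "u < sigma T t" using u by (auto simp: d_def)
        then show False using no_between[of u t] u by auto
      qed
      have "ee T l s (sigma T t) - ee T l s u - (sigma T t - u) *\<^sub>R (l * ee T l s t)
          = ee T l s t - ee T l s u - (t - u) *\<^sub>R (l * ee T l s t)"
        using ee_jump[OF t lt] by (simp add: scaleR_conv_of_real algebra_simps)
      also have "norm \<dots> \<le> \<epsilon> * \<bar>t - u\<bar>" using key[of u] u by (auto simp: d_def)
      also have "\<dots> \<le> \<epsilon> * \<bar>sigma T t - u\<bar>" using eps ut lt by (intro mult_left_mono) auto
      finally show "norm (ee T l s (sigma T t) - ee T l s u - (sigma T t - u) *\<^sub>R (l * ee T l s t)) \<le> \<epsilon> * \<bar>sigma T t - u\<bar>" .
    qed
  qed
qed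

lemma exp_solution: "is_solution T (\<lambda>z. l * z) s (\<lambda>t. a * ee T l s t)"
  unfolding is_solution_def
proof (intro ballI impI)
  fix t assume "t \<in> T" "s \<le> t"
  from dd_cmult[OF ee_deriv[OF this], of a]
  show "has_delta_derivative (T \<inter> {s..}) (\<lambda>t. a * ee T l s t) (l * (a * ee T l s t)) t"
    by (simp add: mult.left_commute)
qed

end
end

lemma (in tscale) exp_exists:
  fixes l a :: complex
  assumes "s \<in> T"
  shows "\<exists>x. is_solution T (\<lambda>z. l * z) s x \<and> x s = a"
  using exp_solution[OF assms, of l a] ee_start[OF assms, of l] by auto


lemma is_solution_scale:
  fixes l c :: complex
  assumes "is_solution T (\<lambda>z. l * z) t0 y"
  shows "is_solution T (\<lambda>z. l * z) t0 (\<lambda>t. c * y t)"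
  unfolding is_solution_def
proof (intro ballI impI)
  fix t assume "t \<in> T" "t0 \<le> t"
  then have "has_delta_derivative (T \<inter> {t0..}) y (l * y t) t" using assms unfolding is_solution_def by blast
  from dd_cmult[OF this, of c] show "has_delta_derivative (T \<inter> {t0..}) (\<lambda>t. c * y t) (l * (c * y t)) t"
    by (simp add: mult.left_commute)
qed

lemma ues_scalar:
  assumes "l \<in> stability_set T"
  shows "\<exists>K\<ge>1. \<exists>\<alpha>>0. \<forall>t0\<in>T. \<forall>t\<in>T. \<forall>y. t0 \<le> t \<longrightarrow> is_solution T (\<lambda>z. l * z) t0 y \<longrightarrow>
           norm (y t) \<le> K * exp (- \<alpha> * (t - t0)) * norm (y t0)"
proof -
  from assms obtain K \<alpha> V where K: "K \<ge> 1" and a: "\<alpha> > 0" and V: "open V" "0 \<in> V"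
    and st: "\<forall>t0\<in>T. \<forall>t\<in>T. \<forall>x0\<in>V. \<forall>x. t0 \<le> t \<longrightarrow> is_solution T (\<lambda>z. l * z) t0 x \<longrightarrow> x t0 = x0 \<longrightarrow>
           norm (x t) \<le> K * exp (- \<alpha> * (t - t0)) * norm x0"
    unfolding stability_set_def uniformly_exp_stable_def by blast
  from V obtain r where r: "r > 0" "ball 0 r \<subseteq> V" using open_contains_ball by blast
  show ?thesis
  proof (rule exI[of _ K], rule conjI[OF K], rule exI[of _ \<alpha>], rule conjI[OF a], intro ballI allI impI)
    fix t0 t y assume t0: "t0 \<in> T" and t: "t \<in> T" and le: "t0 \<le> t" and sol: "is_solution T (\<lambda>z. l * z) t0 y"
    show "norm (y t) \<le> K * exp (- \<alpha> * (t - t0)) * norm (y t0)"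
    proof (cases "y t0 = 0")
      case True
      have "norm (y t) \<le> K * exp (- \<alpha> * (t - t0)) * norm (y t0)"
        using st[rule_format, OF t0 t V(2) le sol True] True by simp
      then show ?thesis .
    next
      case False
      define \<rho> where "\<rho> = r / (2 * norm (y t0))"
      have \<rho>: "\<rho> > 0" using r False by (simp add: \<rho>_def)
      have \<rho>n: "\<rho> * norm (y t0) = r / 2" using False by (simp add: \<rho>_def)
      define c where "c = complex_of_real \<rho>"
      have nc: "norm c = \<rho>" using \<rho> by (simp add: c_def)
      have cpos: "norm c > 0" using nc \<rho> by simp
      have sol': "is_solution T (\<lambda>z. l * z) t0 (\<lambda>t. c * y t)" by (rule is_solution_scale[OF sol])
      have "norm (c * y t0) = r / 2" using \<rho>n by (simp add: norm_mult nc)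
      then have "c * y t0 \<in> V" using r by auto
      then have "norm (c * y t) \<le> K * exp (- \<alpha> * (t - t0)) * norm (c * y t0)"
        using st[rule_format, OF t0 t \<open>c * y t0 \<in> V\<close> le sol'] by simp
      then have "norm c * norm (y t) \<le> norm c * (K * exp (- \<alpha> * (t - t0)) * norm (y t0))"
        by (simp add: norm_mult mult_ac)
      then show ?thesis using cpos by simp
    qed
  qed
qed

locale bts = tscale +
  fixes B :: real
  assumes B0: "B \<ge> 0" and grB: "\<And>t. t \<in> T \<Longrightarrow> sigma T t - t \<le> B"
begin

lemma sol_inh_restrict:
  assumes "sol_inh T l f t0 y" "t0 \<le> t1"
  shows "sol_inh T l f t1 y"
  unfolding sol_inh_def
proof (intro ballI impI)
  fix t assume t: "t \<in> T" "t1 \<le> t"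
  have d: "has_delta_derivative (T \<inter> {t0..}) y (l * y t + f t) t" using assms t unfolding sol_inh_def by auto
  have sg: "sigma (T \<inter> {t1..}) t = sigma (T \<inter> {t0..}) t"
    using sigma_restrict[of t1 t] sigma_restrict[of t0 t] assms t by simp
  have sub: "T \<inter> {t1..} \<subseteq> T \<inter> {t0..}" using assms(2) by auto
  show "has_delta_derivative (T \<inter> {t1..}) y (l * y t + f t) t" by (rule dd_mono[OF d sub sg])
qed

lemma decomp:
  fixes l :: complex
  assumes K: "\<forall>t0\<in>T. \<forall>t\<in>T. \<forall>y. t0 \<le> t \<longrightarrow> is_solution T (\<lambda>z. l * z) t0 y \<longrightarrow>
           norm (y t) \<le> K * exp (- \<alpha> * (t - t0)) * norm (y t0)"
    and t1: "t1 \<in> T" and sol: "sol_inh T l f t1 y" and F: "F \<ge> 0"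
    and fb: "\<forall>\<tau>\<in>T. t1 \<le> \<tau> \<and> \<tau> \<le> t \<longrightarrow> norm (f \<tau>) \<le> F"
    and t: "t \<in> T" "t1 \<le> t"
  shows "norm (y t) \<le> K * exp (- \<alpha> * (t - t1)) * norm (y t1) + F * exp ((norm l + 1) * (t - t1))"
proof -
  define h where "h = (\<lambda>t. y t1 * ee T l t1 t)"
  have hs: "is_solution T (\<lambda>z. l * z) t1 h" unfolding h_def by (rule exp_solution[OF t1])
  have h1: "h t1 = y t1" unfolding h_def using ee_start[OF t1] by simp
  define p where "p = (\<lambda>t. y t - h t)"
  have ps: "sol_inh T l f t1 p" unfolding sol_inh_def
  proof (intro ballI impI)
    fix \<tau> assume \<tau>: "\<tau> \<in> T" "t1 \<le> \<tau>"
    have a: "has_delta_derivative (T \<inter> {t1..}) y (l * y \<tau> + f \<tau>) \<tau>" using sol \<tau> by (auto simp: sol_inh_def)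
    have b: "has_delta_derivative (T \<inter> {t1..}) h (l * h \<tau>) \<tau>" using hs \<tau> by (auto simp: is_solution_def)
    from dd_diff[OF a b] show "has_delta_derivative (T \<inter> {t1..}) p (l * p \<tau> + f \<tau>) \<tau>"
      by (simp add: p_def algebra_simps)
  qed
  have p0: "p t1 = 0" by (simp add: p_def h1)
  have "norm (p t) \<le> F * exp ((norm l + 1) * (t - t1))" by (rule gronwall[OF t1 ps p0 F fb t])
  moreover have "norm (h t) \<le> K * exp (- \<alpha> * (t - t1)) * norm (h t1)" using K[rule_format, OF t1 t(1) t(2) hs] .
  moreover have "y t = h t + p t" by (simp add: p_def)
  ultimately show ?thesis using norm_triangle_ineq[of "h t" "p t"] h1 by simp
qed

lemma left_point:
  assumes t0: "t0 \<in> T" and x: "t0 \<le> x"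
  shows "\<exists>t1\<in>T. t0 \<le> t1 \<and> t1 \<le> x \<and> x - B \<le> t1"
proof -
  define t1 where "t1 = Sup (T \<inter> {t0..x})"
  have ne: "T \<inter> {t0..x} \<noteq> {}" using t0 x by auto
  have bd: "bdd_above (T \<inter> {t0..x})" by (auto intro: bdd_aboveI[of _ x])
  have t1in: "t1 \<in> T \<inter> {t0..x}" unfolding t1_def
    by (rule closed_contains_Sup[OF ne bd]) (simp add: closed_Int clT)
  have up: "\<And>u. u \<in> T \<Longrightarrow> t0 \<le> u \<Longrightarrow> u \<le> x \<Longrightarrow> u \<le> t1"
    unfolding t1_def by (rule cSup_upper[OF _ bd]) auto
  show ?thesis
  proof (cases "t1 = x")
    case True then show ?thesis using t1in B0 by auto
  next
    case False
    then have lt: "t1 < x" using t1in by auto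
    have "x < sigma T t1"
    proof (rule ccontr)
      assume "\<not> x < sigma T t1"
      then have sx: "sigma T t1 \<le> x" by simp
      have "sigma T t1 \<le> t1" using up[OF sigma_in _ sx] sigma_ge[of t1] t1in by auto
      then have rd: "sigma T t1 = t1" using sigma_ge[of t1] by simp
      from rd_points[OF rd, of "x - t1"] lt obtain u where "u \<in> T" "t1 < u" "u < x" by auto
      then show False using up[of u] t1in by auto
    qed
    then show ?thesis using grB[of t1] t1in by (intro bexI[of _ t1]) auto
  qed
qed

lemma inh_decay:
  fixes l :: complex
  assumes lS: "l \<in> stability_set T" and beta: "\<beta> > 0"
  shows "\<exists>C\<ge>0. \<exists>\<gamma>>0. \<forall>t0\<in>T. \<forall>y f M. M \<ge> 0 \<longrightarrow> sol_inh T l f t0 y \<longrightarrow>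
           (\<forall>t\<in>T. t0 \<le> t \<longrightarrow> norm (f t) \<le> M * exp (- \<beta> * (t - t0))) \<longrightarrow>
           (\<forall>t\<in>T. t0 \<le> t \<longrightarrow> norm (y t) \<le> C * (norm (y t0) + M) * exp (- \<gamma> * (t - t0)))"
proof -
  from ues_scalar[OF lS] obtain K \<alpha> where K: "K \<ge> 1" and a: "\<alpha> > 0" and
    Kst: "\<forall>t0\<in>T. \<forall>t\<in>T. \<forall>y. t0 \<le> t \<longrightarrow> is_solution T (\<lambda>z. l * z) t0 y \<longrightarrow>
           norm (y t) \<le> K * exp (- \<alpha> * (t - t0)) * norm (y t0)" by blast
  define L where "L = ln (2 * K) / \<alpha>"
  have L: "L > 0" using K a by (simp add: L_def)
  have KL: "K * exp (- \<alpha> * L) = 1/2"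
  proof -
    have "exp (- \<alpha> * L) = inverse (2 * K)" using a K by (simp add: L_def exp_minus)
    then have "K * exp (- \<alpha> * L) = K / (2 * K)" by (simp add: inverse_eq_divide)
    also have "\<dots> = 1/2" using K by simp
    finally show ?thesis .
  qed
  define c where "c = norm l + 1"
  define D where "D = L + B"
  have D: "D > 0" using L B0 by (simp add: D_def)
  define \<gamma> where "\<gamma> = min \<beta> (ln (3/2) / D)"
  have g: "\<gamma> > 0" using beta D by (simp add: \<gamma>_def)
  have gb: "\<gamma> \<le> \<beta>" by (simp add: \<gamma>_def)
  have gD: "exp (\<gamma> * D) \<le> 3/2"
  proof -
    have "\<gamma> * D \<le> (ln (3/2) / D) * D" using D by (intro mult_right_mono) (auto simp: \<gamma>_def)
    then have "\<gamma> * D \<le> ln (3/2)" using D by simp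
    then have "exp (\<gamma> * D) \<le> exp (ln (3/2))" by (simp only: exp_le_cancel_iff)
    then show ?thesis by simp
  qed
  define E where "E = exp (c * D)"
  have E: "E \<ge> 1" using D by (simp add: E_def c_def)
  define C where "C = exp (\<gamma> * D) * K + exp (\<gamma> * D) * E + 6 * E"
  have C: "C \<ge> 0" using K E by (simp add: C_def)
  show ?thesis
  proof (rule exI[of _ C], rule conjI[OF C], rule exI[of _ \<gamma>], rule conjI[OF g], intro ballI allI impI)
    fix t0 y f M
    assume t0: "t0 \<in> T" and M: "M \<ge> 0" and sol: "sol_inh T l f t0 y"
      and fb: "\<forall>t\<in>T. t0 \<le> t \<longrightarrow> norm (f t) \<le> M * exp (- \<beta> * (t - t0))"
    define w where "w = (\<lambda>t. norm (y t) * exp (\<gamma> * (t - t0)))"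
    define W where "W = exp (\<gamma> * D) * (K * norm (y t0) + M * E) + 6 * M * E"
    have fb1: "\<forall>\<tau>\<in>T. t1 \<le> \<tau> \<and> \<tau> \<le> t \<longrightarrow> norm (f \<tau>) \<le> M * exp (- \<beta> * (t1 - t0))"
      if "t0 \<le> t1" for t1 t
    proof (intro ballI impI)
      fix \<tau> assume "\<tau> \<in> T" "t1 \<le> \<tau> \<and> \<tau> \<le> t"
      then have "norm (f \<tau>) \<le> M * exp (- \<beta> * (\<tau> - t0))" using fb that by auto
      also have "\<dots> \<le> M * exp (- \<beta> * (t1 - t0))"
        using M beta \<open>t1 \<le> \<tau> \<and> \<tau> \<le> t\<close> by (intro mult_left_mono) auto
      finally show "norm (f \<tau>) \<le> M * exp (- \<beta> * (t1 - t0))" .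
    qed
    have step: "norm (y t) \<le> K * exp (- \<alpha> * (t - t1)) * norm (y t1) + M * exp (- \<beta> * (t1 - t0)) * E"
      if t1: "t1 \<in> T" "t0 \<le> t1" and t: "t \<in> T" "t1 \<le> t" "t \<le> t1 + D" for t1 t
    proof -
      have M': "M * exp (- \<beta> * (t1 - t0)) \<ge> 0" using M by simp
      have y1: "norm (y t) \<le> K * exp (- \<alpha> * (t - t1)) * norm (y t1) + M * exp (- \<beta> * (t1 - t0)) * exp ((norm l + 1) * (t - t1))"
        by (rule decomp[OF Kst t1(1) sol_inh_restrict[OF sol t1(2)] M' fb1[OF t1(2)] t(1,2)])
      have e: "exp ((norm l + 1) * (t - t1)) \<le> E" using t by (simp add: E_def c_def mult_left_mono)
      have "M * exp (- \<beta> * (t1 - t0)) * exp ((norm l + 1) * (t - t1)) \<le> M * exp (- \<beta> * (t1 - t0)) * E"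
        by (rule mult_left_mono[OF e M'])
      then show ?thesis using y1 by linarith
    qed
    have W0: "W \<ge> 0" using M E K by (simp add: W_def)
    have base: "w t \<le> W" if t: "t \<in> T" "t0 \<le> t" "t \<le> t0 + D" for t
    proof -
      have "norm (y t) \<le> K * exp (- \<alpha> * (t - t0)) * norm (y t0) + M * exp (- \<beta> * (t0 - t0)) * E"
        by (rule step[OF t0 order_refl t])
      also have "K * exp (- \<alpha> * (t - t0)) * norm (y t0) \<le> K * norm (y t0)"
      proof -
        have "exp (- \<alpha> * (t - t0)) \<le> 1" using a t by (simp add: mult_nonneg_nonneg)
        then have "exp (- \<alpha> * (t - t0)) * norm (y t0) \<le> 1 * norm (y t0)" by (rule mult_right_mono) simp
        then show ?thesis using K by (simp add: mult.assoc mult_left_mono)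
      qed
      finally have y: "norm (y t) \<le> K * norm (y t0) + M * E" by simp
      have "w t \<le> (K * norm (y t0) + M * E) * exp (\<gamma> * D)"
        unfolding w_def using y t g K M E by (intro mult_mono) auto
      moreover have "0 \<le> 6 * M * E" using M E by simp
      ultimately show ?thesis by (simp add: W_def mult_ac)
    qed
    have rec: "w t \<le> 3/4 * w t1 + 3/2 * M * E"
      if t1: "t1 \<in> T" "t0 \<le> t1" and t: "t \<in> T" "t1 + L \<le> t" "t \<le> t1 + D" for t1 t
    proof -
      have y0: "norm (y t) \<le> K * exp (- \<alpha> * (t - t1)) * norm (y t1) + M * exp (- \<beta> * (t1 - t0)) * E"
        using step[OF t1 t(1)] t L by simp
      have "K * exp (- \<alpha> * (t - t1)) \<le> K * exp (- \<alpha> * L)" using t a K by (simp add: mult_left_mono)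
      then have "K * exp (- \<alpha> * (t - t1)) \<le> 1/2" using KL by simp
      then have "K * exp (- \<alpha> * (t - t1)) * norm (y t1) \<le> 1/2 * norm (y t1)"
        by (rule mult_right_mono) simp
      then have y: "norm (y t) \<le> 1/2 * norm (y t1) + M * exp (- \<beta> * (t1 - t0)) * E" using y0 by simp
      have e1: "exp (\<gamma> * (t - t0)) = exp (\<gamma> * (t - t1)) * exp (\<gamma> * (t1 - t0))"
        by (simp add: algebra_simps flip: exp_add)
      have e2: "exp (\<gamma> * (t - t1)) \<le> 3/2"
      proof -
        have "\<gamma> * (t - t1) \<le> \<gamma> * D" using t g by (intro mult_left_mono) auto
        then have "exp (\<gamma> * (t - t1)) \<le> exp (\<gamma> * D)" by (simp only: exp_le_cancel_iff)
        then show ?thesis using gD by linarith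
      qed
      have e3: "exp (- \<beta> * (t1 - t0)) * exp (\<gamma> * (t - t0)) \<le> 3/2"
      proof -
        have "- \<beta> * (t1 - t0) + \<gamma> * (t - t0) = \<gamma> * (t - t1) + (\<gamma> - \<beta>) * (t1 - t0)" by (simp add: algebra_simps)
        also have "\<dots> \<le> \<gamma> * (t - t1)" using gb t1 by (simp add: mult_nonpos_nonneg)
        finally have "exp (- \<beta> * (t1 - t0) + \<gamma> * (t - t0)) \<le> exp (\<gamma> * (t - t1))" by (simp only: exp_le_cancel_iff)
        then have "exp (- \<beta> * (t1 - t0)) * exp (\<gamma> * (t - t0)) \<le> exp (\<gamma> * (t - t1))"
          by (simp only: exp_add)
        then show ?thesis using e2 by linarith
      qed
      have "w t \<le> (1/2 * norm (y t1) + M * exp (- \<beta> * (t1 - t0)) * E) * exp (\<gamma> * (t - t0))"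
        unfolding w_def using y by (intro mult_right_mono) auto
      also have "\<dots> = 1/2 * exp (\<gamma> * (t - t1)) * w t1 + M * E * (exp (- \<beta> * (t1 - t0)) * exp (\<gamma> * (t - t0)))"
        unfolding w_def e1 by (simp add: algebra_simps)
      also have "\<dots> \<le> 1/2 * (3/2) * w t1 + M * E * (3/2)"
      proof (rule add_mono)
        show "1/2 * exp (\<gamma> * (t - t1)) * w t1 \<le> 1/2 * (3/2) * w t1"
          using e2 by (intro mult_right_mono) (auto simp: w_def)
        show "M * E * (exp (- \<beta> * (t1 - t0)) * exp (\<gamma> * (t - t0))) \<le> M * E * (3/2)"
          using e3 M E by (intro mult_left_mono) auto
      qed
      finally show ?thesis by simp
    qed
    have ind: "\<forall>t\<in>T. t0 \<le> t \<and> t < t0 + real n * L \<longrightarrow> w t \<le> W" for n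
    proof (induction n)
      case 0 then show ?case using L by auto
    next
      case (Suc n)
      show ?case
      proof (intro ballI impI)
        fix t assume t: "t \<in> T" "t0 \<le> t \<and> t < t0 + real (Suc n) * L"
        show "w t \<le> W"
        proof (cases "t < t0 + L")
          case True then show ?thesis using base t L B0 by (auto simp: D_def)
        next
          case False
          from left_point[OF t0, of "t - L"] False obtain t1 where t1: "t1 \<in> T" "t0 \<le> t1" "t1 \<le> t - L" "t - L - B \<le> t1"
            by auto
          have "t1 < t0 + real n * L" using t t1 by (simp add: algebra_simps)
          then have "w t1 \<le> W" using Suc.IH t1 by auto
          moreover have "w t \<le> 3/4 * w t1 + 3/2 * M * E" using rec[OF t1(1,2) t(1)] t1 by (simp add: D_def)
          moreover have "6 * M * E \<le> W" using K M E by (simp add: W_def)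
          ultimately show ?thesis by linarith
        qed
      qed
    qed
    fix t assume t: "t \<in> T" "t0 \<le> t"
    obtain n :: nat where "(t - t0) / L < real n" using reals_Archimedean2 by blast
    then have "t < t0 + real n * L" using L by (simp add: field_simps)
    then have wt: "w t \<le> W" using ind t by blast
    have "norm (y t) = w t * exp (- \<gamma> * (t - t0))" by (simp add: w_def flip: exp_add)
    also have "\<dots> \<le> W * exp (- \<gamma> * (t - t0))" using wt by (simp add: mult_right_mono)
    also have "W \<le> C * (norm (y t0) + M)"
    proof -
      have "exp (\<gamma> * D) * K * norm (y t0) \<le> exp (\<gamma> * D) * K * (norm (y t0) + M)" using M K by (simp add: mult_left_mono)
      moreover have "exp (\<gamma> * D) * M * E \<le> exp (\<gamma> * D) * E * (norm (y t0) + M)" using M E by (simp add: mult_left_mono)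
      moreover have "6 * M * E \<le> 6 * E * (norm (y t0) + M)" using M E by (simp add: mult_left_mono)
      ultimately show ?thesis by (simp add: W_def C_def algebra_simps)
    qed
    then have "W * exp (- \<gamma> * (t - t0)) \<le> C * (norm (y t0) + M) * exp (- \<gamma> * (t - t0))"
      by (simp add: mult_right_mono)
    finally show "norm (y t) \<le> C * (norm (y t0) + M) * exp (- \<gamma> * (t - t0))" .
  qed
qed

end


section \<open>Polynomials evaluated at complex matrices\<close>

lemma if_mult0: "(if P then a else 0) * x = (if P then a * x else (0::'a::semiring_0))" by simp
lemma mult_if0: "x * (if P then a else 0) = (if P then x * a else (0::'a::semiring_0))" by simp

lemma matrix_mul_zero_r: "A ** (0::'a::semiring_1^'n^'m) = 0"
  by (simp add: matrix_matrix_mult_def vec_eq_iff)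
lemma matrix_mul_zero_l: "(0::'a::semiring_1^'n^'m) ** A = 0"
  by (simp add: matrix_matrix_mult_def vec_eq_iff)
lemma matrix_add_rdistrib': "(A + B) ** C = A ** C + B ** (C :: 'a::semiring_1^'n^'m)"
  by (simp add: matrix_matrix_mult_def vec_eq_iff sum.distrib algebra_simps)

lemma mat_mult_left: "(mat a ** B) = (\<chi> i j. a * B$i$j)" for B :: "'a::comm_ring_1^'n^'m"
  by (simp add: matrix_matrix_mult_def mat_def vec_eq_iff if_mult0 sum.delta)

lemma mat_mult_right: "(B ** mat a) = (\<chi> i j. B$i$j * a)" for B :: "'a::comm_ring_1^'n^'m"
  by (simp add: matrix_matrix_mult_def mat_def vec_eq_iff mult_if0 sum.delta')

lemma mat_comm: "mat a ** B = B ** mat a" for B :: "'a::comm_ring_1^'n^'n"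
  by (simp add: mat_mult_left mat_mult_right mult.commute)

lemma mat_add_eq: "mat (a + b) = (mat a + mat b :: 'a::comm_ring_1^'n^'n)"
  by (simp add: mat_def vec_eq_iff)

lemma mat_mult_eq: "mat (a * b) = (mat a ** mat b :: 'a::comm_ring_1^'n^'n)"
  by (simp add: mat_mult_left) (simp add: mat_def vec_eq_iff)

lemma mat_vec: "mat a *v v = (\<chi> i. a * v $ i)" for v :: "'a::comm_ring_1^'n"
  by (simp add: matrix_vector_mult_def mat_def vec_eq_iff if_mult0 sum.delta)

definition mpow :: "'a::comm_ring_1^'n^'n \<Rightarrow> nat \<Rightarrow> 'a^'n^'n" where
  "mpow M k = (((**) M) ^^ k) (mat 1)"

lemma mpow_0[simp]: "mpow M 0 = mat 1" by (simp add: mpow_def)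
lemma mpow_Suc[simp]: "mpow M (Suc k) = M ** mpow M k" by (simp add: mpow_def)

definition meval :: "complex poly \<Rightarrow> complex^'n^'n \<Rightarrow> complex^'n^'n" where
  "meval p M = fold_coeffs (\<lambda>a N. mat a + M ** N) p 0"

lemma meval_0[simp]: "meval 0 M = 0" by (simp add: meval_def)

lemma meval_pCons[simp]: "meval (pCons a p) M = mat a + M ** meval p M"
  by (cases "p = 0 \<and> a = 0") (auto simp: meval_def)

lemma meval_add: "meval (p + q) M = meval p M + meval q M"
proof (induction p arbitrary: q)
  case 0 then show ?case by simp
next
  case (pCons a p)
  obtain b q' where q: "q = pCons b q'" by (cases q) auto
  show ?case using pCons.IH[of q'] by (simp add: q mat_add_eq matrix_add_ldistrib algebra_simps)
qed

lemma meval_smult: "meval (smult c p) M = mat c ** meval p M"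
proof (induction p)
  case 0 then show ?case by (simp add: matrix_mul_zero_r)
next
  case (pCons a p)
  have cm: "mat c ** M = M ** mat c" by (rule mat_comm)
  have "mat c ** (mat a + M ** meval p M) = mat (c * a) + M ** (mat c ** meval p M)"
    by (simp add: matrix_add_ldistrib mat_mult_eq matrix_mul_assoc cm)
  then show ?case using pCons.IH by simp
qed

lemma meval_mult: "meval (p * q) M = meval p M ** meval q M"
proof (induction p)
  case 0 then show ?case by (simp add: matrix_mul_zero_l)
next
  case (pCons a p)
  have "meval (pCons a p * q) M = meval (smult a q + pCons 0 (p * q)) M" by simp
  also have "\<dots> = mat a ** meval q M + M ** (meval p M ** meval q M)"
    by (simp add: meval_add meval_smult pCons.IH)
  also have "\<dots> = (mat a + M ** meval p M) ** meval q M"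
    by (simp add: matrix_add_rdistrib' matrix_mul_assoc)
  finally show ?case by simp
qed

lemma meval_1[simp]: "meval 1 M = mat 1"
  by (simp add: one_pCons matrix_mul_zero_r)

lemma meval_X: "meval [:0, 1:] M = M"
  by (simp add: matrix_mul_zero_r)

lemma meval_lin: "meval [:-r, 1:] M = M - mat r"
proof -
  have "mat (-r) = - (mat r :: complex^'n^'n)" by (simp add: mat_def vec_eq_iff)
  then show ?thesis by (simp add: matrix_mul_zero_r)
qed

lemma meval_Xpow: "meval ([:0, 1:] ^ k) M = mpow M k"
  by (induction k) (simp_all add: meval_mult meval_X)

lemma meval_monom: "meval (monom c k) M = mat c ** mpow M k"
  by (simp add: monom_altdef meval_smult meval_Xpow)

lemma meval_sum: "meval (\<Sum>i\<in>A. f i) M = (\<Sum>i\<in>A. meval (f i) M)"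
  by (induction A rule: infinite_finite_induct) (simp_all add: meval_add)

lemma meval_comm: "meval p M ** M = M ** meval p M"
proof -
  have "meval p M ** M = meval (p * [:0,1:]) M" by (simp only: meval_mult meval_X)
  also have "\<dots> = meval ([:0,1:] * p) M" by (simp only: mult.commute)
  also have "\<dots> = M ** meval p M" by (simp only: meval_mult meval_X)
  finally show ?thesis .
qed

lemma mat_of_real_mult: "mat (complex_of_real c) ** A = c *\<^sub>R A" for A :: "complex^'n^'n"
  by (simp add: mat_mult_left vec_eq_iff) (simp add: scaleR_conv_of_real)

lemma annihilating_poly:
  fixes M :: "complex^'n^'n"
  shows "\<exists>q. q \<noteq> 0 \<and> meval q M = 0"
proof (cases "inj_on (mpow M) {..DIM(complex^'n^'n)}")
  case False
  then obtain i j where ij: "i \<le> DIM(complex^'n^'n)" "j \<le> DIM(complex^'n^'n)" "i \<noteq> j" "mpow M i = mpow M j"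
    unfolding inj_on_def by auto
  define q where "q = monom 1 j - monom (1::complex) i"
  have "coeff q j = 1" using ij by (simp add: q_def coeff_monom)
  then have "q \<noteq> 0" by auto
  moreover have "meval q M = 0"
  proof -
    have qq: "q = monom 1 j + smult (-1) (monom 1 i)" by (simp add: q_def)
    have "meval q M = mat 1 ** mpow M j + mat (-1) ** (mat 1 ** mpow M i)"
      unfolding qq meval_add meval_smult meval_monom ..
    also have "\<dots> = 0" using ij by (simp add: mat_mult_left vec_eq_iff)
    finally show ?thesis .
  qed
  ultimately show ?thesis by blast
next
  case True
  define N where "N = DIM(complex^'n^'n)"
  define P where "P = mpow M ` {..N}"
  have finP: "finite P" by (simp add: P_def)
  have cardP: "card P = N + 1" using True by (simp add: P_def N_def card_image)
  have "dependent P" by (rule dependent_biggerset) (simp add: cardP N_def)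
  then obtain u where u: "\<exists>v\<in>P. u v \<noteq> 0" "(\<Sum>v\<in>P. u v *\<^sub>R v) = 0"
    using real_vector.dependent_finite[OF finP] by blast
  define q where "q = (\<Sum>i\<le>N. monom (complex_of_real (u (mpow M i))) i)"
  have "meval q M = (\<Sum>i\<le>N. u (mpow M i) *\<^sub>R mpow M i)"
    by (simp add: q_def meval_sum meval_monom mat_of_real_mult)
  also have "\<dots> = (\<Sum>v\<in>P. u v *\<^sub>R v)"
    unfolding P_def using True by (simp add: sum.reindex N_def)
  also have "\<dots> = 0" by (rule u(2))
  finally have qz: "meval q M = 0" .
  from u(1) obtain k where k: "k \<le> N" "u (mpow M k) \<noteq> 0" unfolding P_def by auto
  have "coeff q k = complex_of_real (u (mpow M k))"
    using k by (simp add: q_def coeff_sum coeff_monom)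
  then have "q \<noteq> 0" using k by auto
  then show ?thesis using qz by blast
qed

lemma annihilating_roots:
  "\<exists>(d::nat) root. meval (\<Prod>i<d. [:-root i, 1:]) (M :: complex^'n^'n) = 0"
proof -
  obtain q where q: "q \<noteq> 0" "meval q M = 0" using annihilating_poly by blast
  obtain root where r: "smult (lead_coeff q) (\<Prod>i<degree q. [:-root i, 1:]) = q"
    using complex_poly_decompose' by blast
  have lc: "lead_coeff q \<noteq> 0" using q by simp
  have "mat (lead_coeff q) ** meval (\<Prod>i<degree q. [:-root i, 1:]) M = 0"
    using q(2) r meval_smult by metis
  then have "mat (1 / lead_coeff q) ** (mat (lead_coeff q) ** meval (\<Prod>i<degree q. [:-root i, 1:]) M) = 0"
    by (simp add: matrix_mul_zero_r)
  then have "meval (\<Prod>i<degree q. [:-root i, 1:]) M = 0"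
    using lc by (simp add: matrix_mul_assoc flip: mat_mult_eq)
  then show ?thesis by blast
qed


definition cplx :: "real^'n \<Rightarrow> complex^'n" where
  "cplx v = (\<chi> i. complex_of_real (v $ i))"

definition cmat :: "real^'n^'n \<Rightarrow> complex^'n^'n" where
  "cmat A = (\<chi> i j. complex_of_real (A $ i $ j))"

lemma norm_cplx: "norm (cplx v) = norm v"
  by (simp add: norm_vec_def cplx_def)

lemma bl_cplx: "bounded_linear cplx"
proof (rule bounded_linear_intro[of _ 1])
  show "cplx (x + y) = cplx x + cplx y" for x y by (simp add: cplx_def vec_eq_iff)
  show "cplx (r *\<^sub>R x) = r *\<^sub>R cplx x" for r x
    by (simp add: cplx_def vec_eq_iff) (simp add: scaleR_conv_of_real)
  show "norm (cplx x) \<le> norm x * 1" for x by (simp add: norm_cplx)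
qed

lemma cmat_cplx: "cmat A *v cplx v = cplx (A *v v)"
  by (simp add: cmat_def cplx_def matrix_vector_mult_def vec_eq_iff)

lemma spec_cmat: "spec A = {c. \<exists>v. v \<noteq> 0 \<and> cmat A *v v = (\<chi> i. c * v $ i)}"
  by (simp add: spec_def cmat_def)

lemma norm_le_sum_cart: "norm (x :: 'a::real_normed_vector^'n) \<le> (\<Sum>i\<in>UNIV. norm (x $ i))"
  by (simp add: norm_vec_def L2_set_le_sum)

section \<open>Necessity\<close>

lemma ues_imp_spec:
  fixes A :: "real^'n^'n"
  assumes ues: "uniformly_exp_stable T (\<lambda>x. A *v x)" and c: "c \<in> spec A"
  shows "c \<in> stability_set T"
proof -
  from ues obtain K \<alpha> V where K: "K \<ge> 1" and a: "\<alpha> > 0" and V: "open V" "0 \<in> V"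
    and st: "\<forall>t0\<in>T. \<forall>t\<in>T. \<forall>x0\<in>V. \<forall>x. t0 \<le> t \<longrightarrow> is_solution T (\<lambda>x. A *v x) t0 x \<longrightarrow> x t0 = x0 \<longrightarrow>
           norm (x t) \<le> K * exp (- \<alpha> * (t - t0)) * norm x0"
    unfolding uniformly_exp_stable_def by blast
  from V obtain r where r: "r > 0" "ball 0 r \<subseteq> V" using open_contains_ball by blast
  from c obtain v where v: "v \<noteq> 0" "cmat A *v v = (\<chi> i. c * v $ i)" unfolding spec_cmat by blast
  from v(1) obtain i0 where i0: "v $ i0 \<noteq> 0" by (auto simp: vec_eq_iff)
  define nv where "nv = norm v"
  have nv: "nv > 0" using v by (simp add: nv_def)
  define an where "an = norm (v $ i0)"
  have an: "an > 0" using i0 by (simp add: an_def)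
  define K' where "K' = max 1 (2 * K * nv / an)"
  define Lre where "Lre = (\<lambda>w::complex. (\<chi> i. Re (w * v $ i)) :: real^'n)"
  define Lim where "Lim = (\<lambda>w::complex. (\<chi> i. Im (w * v $ i)) :: real^'n)"
  have nb: "norm ((\<chi> i. g (w * v $ i)) :: real^'n) \<le> norm w * nv"
    if g: "\<And>z. \<bar>g z\<bar> \<le> cmod z" for g w
  proof -
    have "norm ((\<chi> i. g (w * v $ i)) :: real^'n) \<le> norm ((\<chi> i. cmod (w * v $ i)) :: real^'n)"
      by (rule norm_le_componentwise_cart) (simp add: g)
    also have "\<dots> = L2_set (\<lambda>i. norm w * norm (v $ i)) UNIV" by (simp add: norm_vec_def norm_mult)
    also have "\<dots> = norm w * nv" by (simp add: nv_def norm_vec_def L2_set_right_distrib)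
    finally show ?thesis .
  qed
  have blre: "bounded_linear Lre"
  proof (rule bounded_linear_intro[of _ nv])
    show "Lre (x + y) = Lre x + Lre y" for x y by (simp add: Lre_def vec_eq_iff algebra_simps)
    show "Lre (r *\<^sub>R x) = r *\<^sub>R Lre x" for r x
      by (simp add: Lre_def vec_eq_iff) (simp add: scaleR_conv_of_real algebra_simps)
    show "norm (Lre x) \<le> norm x * nv" for x unfolding Lre_def by (rule nb) (rule abs_Re_le_cmod)
  qed
  have blim: "bounded_linear Lim"
  proof (rule bounded_linear_intro[of _ nv])
    show "Lim (x + y) = Lim x + Lim y" for x y by (simp add: Lim_def vec_eq_iff algebra_simps)
    show "Lim (r *\<^sub>R x) = r *\<^sub>R Lim x" for r x
      by (simp add: Lim_def vec_eq_iff) (simp add: scaleR_conv_of_real algebra_simps)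
    show "norm (Lim x) \<le> norm x * nv" for x unfolding Lim_def by (rule nb) (rule abs_Im_le_cmod)
  qed
  have Av: "(\<Sum>j\<in>UNIV. complex_of_real (A $ i $ j) * v $ j) = c * v $ i" for i
    using v(2) by (simp add: cmat_def matrix_vector_mult_def vec_eq_iff)
  have ALre: "A *v Lre w = Lre (c * w)" for w
  proof -
    have "(A *v Lre w) $ i = Lre (c * w) $ i" for i
    proof -
      have "(A *v Lre w) $ i = (\<Sum>j\<in>UNIV. A $ i $ j * Re (w * v $ j))"
        by (simp add: matrix_vector_mult_def Lre_def)
      also have "\<dots> = Re (w * (\<Sum>j\<in>UNIV. complex_of_real (A $ i $ j) * v $ j))"
        by (simp add: Re_sum sum_distrib_left algebra_simps)
      also have "\<dots> = Lre (c * w) $ i" unfolding Av by (simp add: Lre_def algebra_simps)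
      finally show ?thesis .
    qed
    then show ?thesis by (simp add: vec_eq_iff)
  qed
  have ALim: "A *v Lim w = Lim (c * w)" for w
  proof -
    have "(A *v Lim w) $ i = Lim (c * w) $ i" for i
    proof -
      have "(A *v Lim w) $ i = (\<Sum>j\<in>UNIV. A $ i $ j * Im (w * v $ j))"
        by (simp add: matrix_vector_mult_def Lim_def)
      also have "\<dots> = Im (w * (\<Sum>j\<in>UNIV. complex_of_real (A $ i $ j) * v $ j))"
        by (simp add: Im_sum sum_distrib_left algebra_simps)
      also have "\<dots> = Lim (c * w) $ i" unfolding Av by (simp add: Lim_def algebra_simps)
      finally show ?thesis .
    qed
    then show ?thesis by (simp add: vec_eq_iff)
  qed
  have solL: "is_solution T (\<lambda>x. A *v x) t0 (\<lambda>t. L (y t))"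
    if y: "is_solution T (\<lambda>z. c * z) t0 y" and L: "bounded_linear L" and AL: "\<And>w. A *v L w = L (c * w)"
    for y t0 and L :: "complex \<Rightarrow> real^'n"
    unfolding is_solution_def
  proof (intro ballI impI)
    fix t assume "t \<in> T" "t0 \<le> t"
    then have "has_delta_derivative (T \<inter> {t0..}) y (c * y t) t" using y unfolding is_solution_def by blast
    from dd_linear[OF L this] show "has_delta_derivative (T \<inter> {t0..}) (\<lambda>t. L (y t)) (A *v L (y t)) t"
      by (simp add: AL)
  qed
  show ?thesis unfolding stability_set_def uniformly_exp_stable_def mem_Collect_eq
  proof (rule exI[of _ K'], rule conjI, simp add: K'_def, rule exI[of _ \<alpha>], rule conjI[OF a],
         rule exI[of _ "ball 0 (r / (nv + 1))"], intro conjI ballI allI impI)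
    show "open (ball (0::complex) (r / (nv + 1)))" by simp
    show "(0::complex) \<in> ball 0 (r / (nv + 1))" using r nv by simp
    fix t0 t y0 y
    assume t0: "t0 \<in> T" and t: "t \<in> T" and y0: "y0 \<in> ball 0 (r / (nv + 1))" and le: "t0 \<le> t"
      and sol: "is_solution T (\<lambda>z. c * z) t0 y" and yt0: "y t0 = y0"
    have small: "norm z < r" if L: "norm z \<le> norm y0 * nv" for z :: "real^'n"
    proof -
      have "norm y0 * nv \<le> (r / (nv + 1)) * nv" using y0 nv by (intro mult_right_mono) auto
      also have "\<dots> < r" using r nv by (simp add: field_simps)
      finally show ?thesis using L by simp
    qed
    have bre: "norm (Lre y0) \<le> norm y0 * nv" unfolding Lre_def by (rule nb) (rule abs_Re_le_cmod)
    have bim: "norm (Lim y0) \<le> norm y0 * nv" unfolding Lim_def by (rule nb) (rule abs_Im_le_cmod)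
    have inV: "Lre y0 \<in> V" "Lim y0 \<in> V" using small[OF bre] small[OF bim] r by auto
    have e1: "norm (Lre (y t)) \<le> K * exp (- \<alpha> * (t - t0)) * norm (Lre y0)"
      using st[rule_format, OF t0 t inV(1) le solL[OF sol blre ALre]] yt0 by simp
    have e2: "norm (Lim (y t)) \<le> K * exp (- \<alpha> * (t - t0)) * norm (Lim y0)"
      using st[rule_format, OF t0 t inV(2) le solL[OF sol blim ALim]] yt0 by simp
    define E where "E = K * exp (- \<alpha> * (t - t0))"
    have E: "E \<ge> 0" using K by (simp add: E_def)
    have "norm (y t) * an = cmod (y t * v $ i0)" by (simp add: an_def norm_mult)
    also have "\<dots> \<le> \<bar>Re (y t * v $ i0)\<bar> + \<bar>Im (y t * v $ i0)\<bar>" by (rule cmod_le)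
    also have "\<dots> \<le> norm (Lre (y t)) + norm (Lim (y t))"
      using component_le_norm_cart[of "Lre (y t)" i0] component_le_norm_cart[of "Lim (y t)" i0]
      by (simp add: Lre_def Lim_def)
    also have "\<dots> \<le> E * (norm y0 * nv) + E * (norm y0 * nv)"
    proof -
      have "E * norm (Lre y0) \<le> E * (norm y0 * nv)" by (rule mult_left_mono[OF bre E])
      moreover have "E * norm (Lim y0) \<le> E * (norm y0 * nv)" by (rule mult_left_mono[OF bim E])
      ultimately show ?thesis using e1 e2 unfolding E_def by linarith
    qed
    finally have "norm (y t) * an \<le> 2 * E * nv * norm y0" by simp
    then have "norm (y t) \<le> (2 * E * nv * norm y0) / an" using an by (simp add: field_simps)
    also have "\<dots> = (2 * K * nv / an) * exp (- \<alpha> * (t - t0)) * norm y0" by (simp add: E_def)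
    also have "\<dots> \<le> K' * exp (- \<alpha> * (t - t0)) * norm y0"
    proof -
      have k: "2 * K * nv / an \<le> K'" by (simp add: K'_def)
      have "(2 * K * nv / an) * (exp (- \<alpha> * (t - t0)) * norm y0) \<le> K' * (exp (- \<alpha> * (t - t0)) * norm y0)"
        by (rule mult_right_mono[OF k]) simp
      then show ?thesis by (simp add: mult.assoc)
    qed
    finally show "norm (y t) \<le> K' * exp (- \<alpha> * (t - t0)) * norm y0" .
  qed
qed


context bts begin

lemma sol_dd:
  fixes A :: "real^'n^'n" and W :: "complex^'n^'n"
  assumes sol: "is_solution T (\<lambda>x. A *v x) t0 x" and t: "t \<in> T" "t0 \<le> t"
    and comm: "W ** cmat A = cmat A ** W"
  shows "has_delta_derivative (T \<inter> {t0..}) (\<lambda>t. W *v cplx (x t)) (cmat A *v (W *v cplx (x t))) t"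
proof -
  have d: "has_delta_derivative (T \<inter> {t0..}) x (A *v x t) t" using sol t unfolding is_solution_def by blast
  have bl: "bounded_linear (\<lambda>v. W *v cplx v)"
    using bounded_linear_compose[OF matrix_vector_mul_bounded_linear[of W] bl_cplx] by (simp add: o_def)
  from dd_linear[OF bl d] have "has_delta_derivative (T \<inter> {t0..}) (\<lambda>t. W *v cplx (x t)) (W *v cplx (A *v x t)) t" .
  moreover have "W *v cplx (A *v x t) = cmat A *v (W *v cplx (x t))"
    by (simp add: cmat_cplx[symmetric] matrix_vector_mul_assoc comm)
  ultimately show ?thesis by simp
qed

definition Qprop :: "real^'n^'n \<Rightarrow> complex^'n^'n \<Rightarrow> bool" where
  "Qprop A W \<longleftrightarrow> (\<exists>C\<ge>0. \<exists>\<gamma>>0. \<forall>t0\<in>T. \<forall>x. is_solution T (\<lambda>x. A *v x) t0 x \<longrightarrow>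
      (\<forall>t\<in>T. t0 \<le> t \<longrightarrow> norm (W *v cplx (x t)) \<le> C * norm (x t0) * exp (- \<gamma> * (t - t0))))"

lemma Qprop_zero: "Qprop A 0"
  unfolding Qprop_def by (rule exI[of _ 0]) (auto intro!: exI[of _ 1])

lemma Qprop_step:
  fixes A :: "real^'n^'n" and W :: "complex^'n^'n"
  assumes specS: "spec A \<subseteq> stability_set T"
    and comm: "W ** cmat A = cmat A ** W"
    and Q: "Qprop A ((cmat A - mat r) ** W)"
  shows "Qprop A W"
proof -
  from Q obtain C' \<gamma>' where C': "C' \<ge> 0" and g': "\<gamma>' > 0" and
    Qb: "\<forall>t0\<in>T. \<forall>x. is_solution T (\<lambda>x. A *v x) t0 x \<longrightarrow>
      (\<forall>t\<in>T. t0 \<le> t \<longrightarrow> norm (((cmat A - mat r) ** W) *v cplx (x t)) \<le> C' * norm (x t0) * exp (- \<gamma>' * (t - t0)))"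
    unfolding Qprop_def by blast
  show ?thesis
  proof (cases "r \<in> spec A")
    case True
    then have rS: "r \<in> stability_set T" using specS by blast
    from inh_decay[OF rS g'] obtain C'' \<gamma>'' where C'': "C'' \<ge> 0" and g'': "\<gamma>'' > 0" and
      inh: "\<forall>t0\<in>T. \<forall>y f M. M \<ge> 0 \<longrightarrow> sol_inh T r f t0 y \<longrightarrow>
           (\<forall>t\<in>T. t0 \<le> t \<longrightarrow> norm (f t) \<le> M * exp (- \<gamma>' * (t - t0))) \<longrightarrow>
           (\<forall>t\<in>T. t0 \<le> t \<longrightarrow> norm (y t) \<le> C'' * (norm (y t0) + M) * exp (- \<gamma>'' * (t - t0)))"
      by blast
    have bl: "bounded_linear (\<lambda>v. W *v cplx v)"
      using bounded_linear_compose[OF matrix_vector_mul_bounded_linear[of W] bl_cplx] by (simp add: o_def)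
    from bounded_linear.pos_bounded[OF bl] obtain BW where BW: "BW > 0" "\<And>v. norm (W *v cplx v) \<le> norm v * BW"
      by blast
    define C where "C = real CARD('n) * (C'' * (BW + C'))"
    show ?thesis unfolding Qprop_def
    proof (rule exI[of _ C], rule conjI, simp add: C_def C'' BW C' less_imp_le,
           rule exI[of _ \<gamma>''], rule conjI[OF g''], intro ballI allI impI)
      fix t0 x t assume t0: "t0 \<in> T" and sol: "is_solution T (\<lambda>x. A *v x) t0 x" and t: "t \<in> T" "t0 \<le> t"
      define u where "u = (\<lambda>t. W *v cplx (x t))"
      define u' where "u' = (\<lambda>t. ((cmat A - mat r) ** W) *v cplx (x t))"
      have comp: "norm (u t $ j) \<le> C'' * (BW + C') * norm (x t0) * exp (- \<gamma>'' * (t - t0))" for j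
      proof -
        have si: "sol_inh T r (\<lambda>t. u' t $ j) t0 (\<lambda>t. u t $ j)" unfolding sol_inh_def
        proof (intro ballI impI)
          fix \<tau> assume \<tau>: "\<tau> \<in> T" "t0 \<le> \<tau>"
          from dd_linear[OF bounded_linear_vec_nth sol_dd[OF sol \<tau> comm]]
          have "has_delta_derivative (T \<inter> {t0..}) (\<lambda>t. u t $ j) ((cmat A *v u \<tau>) $ j) \<tau>"
            by (simp add: u_def)
          moreover have "(cmat A *v u \<tau>) $ j = r * u \<tau> $ j + u' \<tau> $ j"
            by (simp add: u_def u'_def matrix_vector_mult_diff_rdistrib mat_vec
                  flip: matrix_vector_mul_assoc)
          ultimately show "has_delta_derivative (T \<inter> {t0..}) (\<lambda>t. u t $ j) (r * u \<tau> $ j + u' \<tau> $ j) \<tau>"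
            by simp
        qed
        have M: "C' * norm (x t0) \<ge> 0" using C' by simp
        have fb: "\<forall>t\<in>T. t0 \<le> t \<longrightarrow> norm (u' t $ j) \<le> C' * norm (x t0) * exp (- \<gamma>' * (t - t0))"
        proof (intro ballI impI)
          fix \<tau> assume "\<tau> \<in> T" "t0 \<le> \<tau>"
          then have "norm (u' \<tau>) \<le> C' * norm (x t0) * exp (- \<gamma>' * (\<tau> - t0))" using Qb t0 sol by (simp add: u'_def)
          then show "norm (u' \<tau> $ j) \<le> C' * norm (x t0) * exp (- \<gamma>' * (\<tau> - t0))"
          proof -
            have "norm (u' \<tau> $ j) \<le> norm (u' \<tau>)" by (rule Finite_Cartesian_Product.norm_nth_le)
            then show ?thesis using \<open>norm (u' \<tau>) \<le> C' * norm (x t0) * exp (- \<gamma>' * (\<tau> - t0))\<close> by linarith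
          qed
        qed
        have "norm (u t $ j) \<le> C'' * (norm (u t0 $ j) + C' * norm (x t0)) * exp (- \<gamma>'' * (t - t0))"
          using inh t0 M si fb t by blast
        also have "norm (u t0 $ j) \<le> BW * norm (x t0)"
          using order_trans[OF Finite_Cartesian_Product.norm_nth_le BW(2)[of "x t0"]] by (simp add: u_def mult.commute)
        then have "C'' * (norm (u t0 $ j) + C' * norm (x t0)) * exp (- \<gamma>'' * (t - t0))
            \<le> C'' * (BW * norm (x t0) + C' * norm (x t0)) * exp (- \<gamma>'' * (t - t0))"
          using C'' by (intro mult_right_mono mult_left_mono add_right_mono) auto
        finally show ?thesis by (simp add: algebra_simps)
      qed
      have "norm (u t) \<le> (\<Sum>j\<in>UNIV. norm (u t $ j))" by (rule norm_le_sum_cart)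
      also have "\<dots> \<le> (\<Sum>j\<in>(UNIV::'n set). C'' * (BW + C') * norm (x t0) * exp (- \<gamma>'' * (t - t0)))"
        by (rule sum_mono) (rule comp)
      also have "\<dots> = C * norm (x t0) * exp (- \<gamma>'' * (t - t0))" by (simp add: C_def mult_ac)
      finally show "norm (W *v cplx (x t)) \<le> C * norm (x t0) * exp (- \<gamma>'' * (t - t0))" by (simp add: u_def)
    qed
  next
    case False
    have inj: "\<forall>v\<in>UNIV. (cmat A - mat r) *v v = 0 \<longrightarrow> v = 0"
    proof (intro ballI impI)
      fix v assume "(cmat A - mat r) *v v = 0"
      then have "cmat A *v v = (\<chi> i. r * v $ i)" by (simp add: matrix_vector_mult_diff_rdistrib mat_vec)
      then show "v = 0" using False unfolding spec_cmat by blast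
    qed
    from injective_imp_isometric[OF closed_UNIV subspace_UNIV matrix_vector_mul_bounded_linear inj]
    obtain e where e: "e > 0" "\<And>v. e * norm v \<le> norm ((cmat A - mat r) *v v)" by blast
    show ?thesis unfolding Qprop_def
    proof (rule exI[of _ "C' / e"], rule conjI, simp add: C' e less_imp_le,
           rule exI[of _ \<gamma>'], rule conjI[OF g'], intro ballI allI impI)
      fix t0 x t assume t0: "t0 \<in> T" and sol: "is_solution T (\<lambda>x. A *v x) t0 x" and t: "t \<in> T" "t0 \<le> t"
      have "e * norm (W *v cplx (x t)) \<le> norm (((cmat A - mat r) ** W) *v cplx (x t))"
        using e(2)[of "W *v cplx (x t)"] by (simp add: matrix_vector_mul_assoc)
      also have "\<dots> \<le> C' * norm (x t0) * exp (- \<gamma>' * (t - t0))" using Qb t0 sol t by blast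
      finally show "norm (W *v cplx (x t)) \<le> C' / e * norm (x t0) * exp (- \<gamma>' * (t - t0))"
        using e(1) by (simp add: field_simps)
    qed
  qed
qed

lemma spec_imp_ues:
  fixes A :: "real^'n^'n"
  assumes specS: "spec A \<subseteq> stability_set T"
  shows "uniformly_exp_stable T (\<lambda>x. A *v x)"
proof -
  from annihilating_roots[of "cmat A"] obtain d :: nat and root where an: "meval (\<Prod>i<d. [:-root i, 1:]) (cmat A) = 0"
    by blast
  define W where "W = (\<lambda>k. meval (\<Prod>i<k. [:-root i, 1:]) (cmat A))"
  have Wd: "W d = 0" using an by (simp add: W_def)
  have WS: "W (Suc k) = (cmat A - mat (root k)) ** W k" for k
  proof -
    have "W (Suc k) = meval ([:-root k, 1:] * (\<Prod>i<k. [:-root i, 1:])) (cmat A)"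
      by (simp add: W_def mult.commute)
    also have "\<dots> = (cmat A - mat (root k)) ** W k" by (simp only: meval_mult meval_lin W_def)
    finally show ?thesis .
  qed
  have Wc: "W k ** cmat A = cmat A ** W k" for k by (simp add: W_def meval_comm)
  have "Qprop A (W (d - j))" if "j \<le> d" for j
    using that
  proof (induction j)
    case 0 then show ?case using Wd Qprop_zero by simp
  next
    case (Suc j)
    then have "Qprop A (W (Suc (d - Suc j)))" by (simp add: Suc_diff_Suc)
    then show ?case using Qprop_step[OF specS Wc] by (simp add: WS)
  qed
  from this[of d] have "Qprop A (W 0)" by simp
  then obtain C \<gamma> where C: "C \<ge> 0" and g: "\<gamma> > 0" and
    b: "\<forall>t0\<in>T. \<forall>x. is_solution T (\<lambda>x. A *v x) t0 x \<longrightarrow>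
      (\<forall>t\<in>T. t0 \<le> t \<longrightarrow> norm (x t) \<le> C * norm (x t0) * exp (- \<gamma> * (t - t0)))"
    unfolding Qprop_def by (auto simp: W_def norm_cplx)
  show ?thesis unfolding uniformly_exp_stable_def
  proof (rule exI[of _ "max 1 C"], rule conjI, simp, rule exI[of _ \<gamma>], rule conjI[OF g],
         rule exI[of _ UNIV], intro conjI ballI allI impI)
    fix t0 t x0 x assume t0: "t0 \<in> T" and t: "t \<in> T" and le: "t0 \<le> t"
      and sol: "is_solution T (\<lambda>x. A *v x) t0 x" and x0: "x t0 = x0"
    have "norm (x t) \<le> C * norm x0 * exp (- \<gamma> * (t - t0))" using b t0 t le sol x0 by blast
    also have "\<dots> \<le> max 1 C * norm x0 * exp (- \<gamma> * (t - t0))"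
      by (intro mult_right_mono) auto
    finally show "norm (x t) \<le> max 1 C * exp (- \<gamma> * (t - t0)) * norm x0" by (simp add: mult_ac)
  qed auto
qed

end

theorem mainTheorem3:
  fixes T :: "real set" and A :: "real^'n^'n"
  assumes "time_scale T"
    and "\<not> bdd_above T"
    and "\<exists>B. \<forall>t\<in>T. graininess T t \<le> B"
  shows "uniformly_exp_stable T (\<lambda>x. A *v x) \<longleftrightarrow> spec A \<subseteq> stability_set T"
proof -
  from assms(3) obtain B where B: "\<forall>t\<in>T. graininess T t \<le> B" by blast
  interpret bts T "max B 0"
  proof
    show "closed T" using assms(1) by (simp add: time_scale_def)
    show "\<not> bdd_above T" by (rule assms(2))
    show "max B 0 \<ge> 0" by simp
    show "sigma T t - t \<le> max B 0" if "t \<in> T" for t using B that by (force simp: graininess_def)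
  qed
  show ?thesis
  proof
    assume "uniformly_exp_stable T (\<lambda>x. A *v x)"
    then show "spec A \<subseteq> stability_set T" using ues_imp_spec by blast
  next
    assume "spec A \<subseteq> stability_set T"
    then show "uniformly_exp_stable T (\<lambda>x. A *v x)" by (rule spec_imp_ues)
  qed
qed


end
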